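(* Let $\boldsymbol{X}_0\in\mathbb{R}^{n\times n}$ be a PSD matrix of rank $r$ with eigendecomposition $\boldsymbol{X}_0=\boldsymbol{U}\boldsymbol{\Lambda}\boldsymbol{U}^T$, $\boldsymbol{U}\in\mathbb{R}^{n\times r}$ with orthonormal columns. Let $\boldsymbol{a}_1,\dots,\boldsymbol{a}_m\in\mathbb{R}^n$, let $\mathcal{A}(\boldsymbol{X})=\{\boldsymbol{a}_i^T\boldsymbol{X}\boldsymbol{a}_i\}_{i=1}^m$, and for $\mathcal{S}\subseteq\{1,\dots,m\}$ let $\mathcal{A}_{\mathcal{S}}(\boldsymbol{X})=\{\boldsymbol{a}_i^T\boldsymbol{X}\boldsymbol{a}_i\}_{i\in\mathcal{S}}$ and $\mathcal{S}^\perp=\{1,\dots,m\}\setminus\mathcal{S}$. Let $\boldsymbol{z}=\mathcal{A}(\boldsymbol{X}_0)+\boldsymbol{\beta}+\boldsymbol{w}$ with $\|\boldsymbol{w}\|_1\le\epsilon$, and let $\hat{\boldsymbol{X}}$ be a solution to $\min_{\boldsymbol{X}\succeq 0}\|\boldsymbol{z}-\mathcal{A}(\boldsymbol{X})\|_1$. Let $0<s_0<1$ be a constant and let $\mathcal{S}\subseteq\{1,\dots,m\}$ be a subset with $|\mathcal{S}|/m=\frac{s_0}{13\sqrt{2r}}$ and $\mathrm{supp}(\boldsymbol{\beta})\subseteq\mathcal{S}$. Suppose that for all symmetric matrices $\boldsymbol{X}$, $$\frac{1}{m}\|\mathcal{A}(\boldsymbol{X})\|_1\le\Big(1+\frac{1}{10}\Big)\|\boldsymbol{X}\|_1,\qquad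 \frac{1}{|\mathcal{S}|}\|\mathcal{A}_{\mathcal{S}}(\boldsymbol{X})\|_1\le\Big(1+\frac{1}{10}\Big)\|\boldsymbol{X}\|_1,$$ and for all $\boldsymbol{X}\in T$, $$\frac{1}{|\mathcal{S}^\perp|}\|\mathcal{A}_{\mathcal{S}^\perp}(\boldsymbol{X})\|_1>\frac{1}{5}\Big(1-\frac{1}{12}\Big)\|\boldsymbol{X}\|_{\mathrm{F}}.$$ If there exists $\boldsymbol{\mu}\in\mathbb{R}^m$ such that $\boldsymbol{Y}=\mathcal{A}^*(\boldsymbol{\mu})=\sum_{i=1}^m\mu_i\boldsymbol{a}_i\boldsymbol{a}_i^T$ satisfies $$\mathcal{P}_{T^\perp}(\boldsymbol{Y})\preceq-\frac{1}{r}\mathcal{P}_{T^\perp}(\boldsymbol{I}),\qquad \|\mathcal{P}_T(\boldsymbol{Y})\|_{\mathrm{F}}\le\frac{1}{13r},$$ and $\mu_i=\frac{9}{m}\mathrm{sgn}(\beta_i)$ for $i\in\mathrm{supp}(\boldsymbol{\beta})$, $|\mu_i|\le\frac{9}{m}$ for $i\notin\mathrm{supp}(\boldsymbol{\beta})$, then $$\|\hat{\boldsymbol{X}}-\boldsymbol{X}_0\|_{\mathrm{F}}\le c\,\frac{r\epsilon}{m},$$ where $c$ is a constant.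
   Context: For a matrix $\boldsymbol{X}$, $\|\boldsymbol{X}\|_1$ denotes the nuclear norm and $\|\boldsymbol{X}\|_{\mathrm{F}}$ the Frobenius norm. $T=\{\boldsymbol{U}\boldsymbol{Z}^T+\boldsymbol{Z}\boldsymbol{U}^T:\boldsymbol{Z}\in\mathbb{R}^{n\times r}\}$ is the symmetric tangent space at $\boldsymbol{X}_0$; $\mathcal{P}_T$ is the orthogonal projection onto $T$ and $\mathcal{P}_{T^\perp}(\boldsymbol{H})=\boldsymbol{H}-\mathcal{P}_T(\boldsymbol{H})=(\boldsymbol{I}-\boldsymbol{U}\boldsymbol{U}^T)\boldsymbol{H}(\boldsymbol{I}-\boldsymbol{U}\boldsymbol{U}^T)$ for symmetric $\boldsymbol{H}$. $\mathrm{sgn}$ is the sign function and $\preceq$ is the Loewner order. *)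

theory Defs
  imports "Jordan_Normal_Form.Jordan_Normal_Form"
begin

definition sym_mat :: "nat \<Rightarrow> real mat \<Rightarrow> bool" where
  "sym_mat n X \<longleftrightarrow> X \<in> carrier_mat n n \<and> transpose_mat X = X"

definition psd_mat :: "nat \<Rightarrow> real mat \<Rightarrow> bool" where
  "psd_mat n X \<longleftrightarrow> sym_mat n X \<and> (\<forall>v \<in> carrier_vec n. v \<bullet> (X *\<^sub>v v) \<ge> 0)"

definition loewner_le :: "nat \<Rightarrow> real mat \<Rightarrow> real mat \<Rightarrow> bool" where
  "loewner_le n A B \<longleftrightarrow> psd_mat n (B - A)"

definition singular_values :: "real mat \<Rightarrow> real multiset" where
  "singular_values X = image_mset sqrt (proots (char_poly (transpose_mat X * X)))"

definition nuclear_norm :: "real mat \<Rightarrow> real" where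
  "nuclear_norm X = sum_mset (singular_values X)"

definition frob_norm :: "real mat \<Rightarrow> real" where
  "frob_norm X = sqrt (\<Sum>i<dim_row X. \<Sum>j<dim_col X. (X $$ (i,j))\<^sup>2)"

definition meas :: "(nat \<Rightarrow> real vec) \<Rightarrow> real mat \<Rightarrow> nat \<Rightarrow> real" where
  "meas a X i = a i \<bullet> (X *\<^sub>v a i)"

definition meas_l1 :: "(nat \<Rightarrow> real vec) \<Rightarrow> nat set \<Rightarrow> real mat \<Rightarrow> real" where
  "meas_l1 a S X = (\<Sum>i\<in>S. \<bar>meas a X i\<bar>)"

definition meas_adj :: "nat \<Rightarrow> nat \<Rightarrow> (nat \<Rightarrow> real vec) \<Rightarrow> (nat \<Rightarrow> real) \<Rightarrow> real mat" where
  "meas_adj n m a \<mu> = mat n n (\<lambda>(j,k). \<Sum>i<m. \<mu> i * (a i $ j) * (a i $ k))"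

definition tangent_space :: "nat \<Rightarrow> nat \<Rightarrow> real mat \<Rightarrow> real mat set" where
  "tangent_space n r U = {U * transpose_mat Z + Z * transpose_mat U | Z. Z \<in> carrier_mat n r}"

definition proj_Tperp :: "nat \<Rightarrow> real mat \<Rightarrow> real mat \<Rightarrow> real mat" where
  "proj_Tperp n U H = (1\<^sub>m n - U * transpose_mat U) * H * (1\<^sub>m n - U * transpose_mat U)"

definition proj_T :: "nat \<Rightarrow> real mat \<Rightarrow> real mat \<Rightarrow> real mat" where
  "proj_T n U H = H - proj_Tperp n U H"

end

theory Submission
  imports Defs
begin


definition bil :: "nat \<Rightarrow> (nat \<Rightarrow> nat \<Rightarrow> real) \<Rightarrow> (nat \<Rightarrow> real) \<Rightarrow> (nat \<Rightarrow> real) \<Rightarrow> real" where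
  "bil n A v w = (\<Sum>i<n. \<Sum>j<n. v i * A i j * w j)"

definition dl :: "nat \<Rightarrow> real \<Rightarrow> nat \<Rightarrow> real" where
  "dl p x = (\<lambda>i. if i = p then x else 0)"

lemma bil_add_left: "bil n A (\<lambda>i. v i + v' i) w = bil n A v w + bil n A v' w"
  unfolding bil_def by (simp add: distrib_left distrib_right sum.distrib)
lemma bil_add_right: "bil n A v (\<lambda>i. w i + w' i) = bil n A v w + bil n A v w'"
  unfolding bil_def by (simp add: distrib_left distrib_right sum.distrib)

lemma sum_dl: assumes "p < n" shows "(\<Sum>i<n. dl p x i * f i) = x * f p"
proof -
  have "(\<Sum>i<n. dl p x i * f i) = (\<Sum>i\<in>{p}. dl p x i * f i)"
    by (rule sum.mono_neutral_right, use assms in \<open>auto simp: dl_def\<close>)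
  thus ?thesis by (simp add: dl_def)
qed

lemma sum_dl': assumes "p < n" shows "(\<Sum>i<n. f i * dl p x i) = f p * x"
  using sum_dl[OF assms, of x f] by (simp add: mult.commute)

lemma bil_dl: assumes "p < n" "q < n" shows "bil n A (dl p x) (dl q y) = x * y * A p q"
proof -
  have "bil n A (dl p x) (dl q y) = (\<Sum>i<n. dl p x i * (\<Sum>j<n. A i j * dl q y j))"
    unfolding bil_def by (simp add: sum_distrib_left mult.assoc)
  also have "\<dots> = x * (\<Sum>j<n. A p j * dl q y j)" by (rule sum_dl[OF assms(1)])
  also have "\<dots> = x * (A p q * y)" by (subst sum_dl'[OF assms(2)], simp)
  finally show ?thesis by simp
qed

lemma psd_diag:
  assumes psd: "\<And>v. bil n A v v \<ge> 0" and p: "p < n"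
  shows "A p p \<ge> 0"
  using psd[of "dl p 1"] bil_dl[OF p p, of A 1 1] by simp

lemma psd_two:
  assumes psd: "\<And>v. bil n A v v \<ge> 0" and p: "p < n" and q: "q < n" and sym: "A q p = A p q"
  shows "x*x*A p p + 2*x*y*A p q + y*y*A q q \<ge> 0"
proof -
  have "bil n A (\<lambda>i. dl p x i + dl q y i) (\<lambda>i. dl p x i + dl q y i)
        = x*x*A p p + 2*x*y*A p q + y*y*A q q"
    by (simp add: bil_add_left bil_add_right bil_dl p q sym)
  thus ?thesis using psd by metis
qed

lemma psd_zero_diag:
  assumes psd: "\<And>v. bil n A v v \<ge> 0" and p: "p < n" and q: "q < n" and sym: "A q p = A p q"
    and z: "A p p = 0"
  shows "A p q = 0"
proof (rule ccontr)
  assume ne: "A p q \<noteq> 0"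
  define x where "x = - (A q q + 1) / (2 * A p q)"
  have "x*x*A p p + 2*x*1*A p q + 1*1*A q q \<ge> 0" by (rule psd_two[OF psd p q sym])
  also have "x*x*A p p + 2*x*1*A p q + 1*1*A q q = -1"
    using ne z unfolding x_def by (simp add: field_simps)
  finally show False by simp
qed

lemma psd_offdiag_sq:
  assumes psd: "\<And>v. bil n A v v \<ge> 0" and p: "p < n" and q: "q < n" and sym: "A q p = A p q"
  shows "(A p q)^2 \<le> A p p * A q q"
proof (cases "A q q = 0")
  case True
  have "A q p = 0" by (rule psd_zero_diag[OF psd q p _ True], simp add: sym)
  thus ?thesis using True sym by simp
next
  case False
  have qq: "A q q > 0" using psd_diag[OF psd q] False by simp
  have "A q q*A q q*A p p + 2*A q q*(- A p q)*A p q + (- A p q)*(- A p q)*A q q \<ge> 0"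
    by (rule psd_two[OF psd p q sym])
  hence "A q q * (A p p * A q q - (A p q)^2) \<ge> 0" by (simp add: algebra_simps power2_eq_square)
  hence "A p p * A q q - (A p q)^2 \<ge> 0" using qq by (simp add: zero_le_mult_iff)
  thus ?thesis by simp
qed

definition fip :: "nat \<Rightarrow> (nat \<Rightarrow> nat \<Rightarrow> real) \<Rightarrow> (nat \<Rightarrow> nat \<Rightarrow> real) \<Rightarrow> real" where
  "fip n A B = (\<Sum>i<n. \<Sum>j<n. A i j * B i j)"

lemma bil_dl_right: assumes "q < n" shows "bil n A v (dl q y) = (\<Sum>i<n. v i * A i q) * y"
proof -
  have "bil n A v (dl q y) = (\<Sum>i<n. v i * (\<Sum>j<n. A i j * dl q y j))"
    unfolding bil_def by (simp add: sum_distrib_left mult.assoc)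
  also have "\<dots> = (\<Sum>i<n. v i * (A i q * y))" using sum_dl'[OF assms] by simp
  finally show ?thesis by (simp add: sum_distrib_right mult.assoc)
qed

lemma bil_dl_left: assumes "p < n" shows "bil n A (dl p x) w = x * (\<Sum>j<n. A p j * w j)"
proof -
  have "bil n A (dl p x) w = (\<Sum>i<n. dl p x i * (\<Sum>j<n. A i j * w j))"
    unfolding bil_def by (simp add: sum_distrib_left mult.assoc)
  also have "\<dots> = x * (\<Sum>j<n. A p j * w j)" by (rule sum_dl[OF assms])
  finally show ?thesis .
qed

lemma fip_psd_aux:
  "n - k = d \<Longrightarrow> k \<le> n \<Longrightarrow> (\<forall>i<n. \<forall>j<n. A j i = A i j) \<Longrightarrow> (\<forall>v. bil n A v v \<ge> 0)
   \<Longrightarrow> (\<forall>v. bil n B v v \<ge> 0)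
   \<Longrightarrow> (\<forall>i<n. \<forall>j<n. (i < k \<or> j < k) \<longrightarrow> A i j = 0) \<Longrightarrow> fip n A B \<ge> 0"
proof (induction d arbitrary: k A)
  case 0
  hence "k = n" by simp
  hence "\<forall>i<n. \<forall>j<n. A i j = 0" using 0 by auto
  thus ?case unfolding fip_def by simp
next
  case (Suc d)
  note sym = Suc.prems(3) and psd = Suc.prems(4) and psdB = Suc.prems(5) and zer = Suc.prems(6)
  define p where "p = k"
  have p: "p < n" using Suc.prems(1) p_def by simp
  have d: "n - Suc k = d" using Suc.prems(1) by simp
  have kn: "Suc k \<le> n" using p p_def by simp
  have psd': "\<And>v. bil n A v v \<ge> 0" using psd by auto
  show ?case
  proof (cases "A p p = 0")
    case True
    have rowz: "A p j = 0" if "j < n" for j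
      using psd_zero_diag[OF psd' p that _ True] sym p that by metis
    have colz: "A j p = 0" if "j < n" for j using rowz[OF that] sym p that by metis
    have zer': "\<forall>i<n. \<forall>j<n. (i < Suc k \<or> j < Suc k) \<longrightarrow> A i j = 0"
    proof (intro allI impI)
      fix i j assume ij: "i < n" "j < n" "i < Suc k \<or> j < Suc k"
      show "A i j = 0"
      proof (cases "i < k \<or> j < k")
        case True thus ?thesis using zer ij by auto
      next
        case False
        hence "i = p \<or> j = p" using ij p_def by auto
        thus ?thesis using rowz colz ij by auto
      qed
    qed
    show ?thesis by (rule Suc.IH[OF d kn sym psd psdB zer'])
  next
    case False
    have pp: "A p p > 0" using psd_diag[OF psd' p] False by simp
    define A' where "A' = (\<lambda>i j. A i j - A i p * A p j / A p p)"
    have sym': "\<forall>i<n. \<forall>j<n. A' j i = A' i j"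
      unfolding A'_def using sym p by (auto simp: algebra_simps)
    have zer': "\<forall>i<n. \<forall>j<n. (i < Suc k \<or> j < Suc k) \<longrightarrow> A' i j = 0"
    proof (intro allI impI)
      fix i j assume ij: "i < n" "j < n" "i < Suc k \<or> j < Suc k"
      show "A' i j = 0"
      proof (cases "i < k \<or> j < k")
        case True
        hence "A i j = 0" using zer ij by auto
        moreover have "A i p = 0 \<or> A p j = 0" using True zer ij p by auto
        ultimately show ?thesis unfolding A'_def by auto
      next
        case False
        hence "i = p \<or> j = p" using ij p_def by auto
        thus ?thesis unfolding A'_def using pp by auto
      qed
    qed
    have bilA': "bil n A' v v = bil n A v v - (\<Sum>i<n. v i * A i p) * (\<Sum>j<n. A p j * v j) / A p p" for v
    proof -
      have "bil n A' v v = (\<Sum>i<n. \<Sum>j<n. v i * A i j * v j - (v i * A i p) * (A p j * v j) / A p p)"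
        unfolding bil_def A'_def by (intro sum.cong refl, simp add: algebra_simps diff_divide_distrib)
      also have "\<dots> = bil n A v v - (\<Sum>i<n. \<Sum>j<n. (v i * A i p) * (A p j * v j)) / A p p"
        unfolding bil_def by (simp add: sum_subtractf sum_divide_distrib)
      also have "(\<Sum>i<n. \<Sum>j<n. (v i * A i p) * (A p j * v j)) = (\<Sum>i<n. v i * A i p) * (\<Sum>j<n. A p j * v j)"
        by (simp add: sum_product)
      finally show ?thesis .
    qed
    have psdA': "\<forall>v. bil n A' v v \<ge> 0"
    proof
      fix v
      define c where "c = (\<Sum>j<n. A p j * v j)"
      have c': "(\<Sum>i<n. v i * A i p) = c" unfolding c_def
        by (intro sum.cong refl, use sym p in \<open>auto simp: mult.commute\<close>)
      define s where "s = c / A p p"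
      have "0 \<le> bil n A (\<lambda>i. v i + dl p (- s) i) (\<lambda>i. v i + dl p (- s) i)" using psd by auto
      also have "\<dots> = bil n A v v + (- s) * c + c * (- s) + (- s) * (- s) * A p p"
        by (simp add: bil_add_left bil_add_right bil_dl bil_dl_left bil_dl_right p c' c_def[symmetric] sum_dl[OF p])
      also have "\<dots> = bil n A v v - c * c / A p p"
        unfolding s_def using pp by (simp add: field_simps)
      also have "\<dots> = bil n A' v v" using bilA'[of v] c' c_def by simp
      finally show "bil n A' v v \<ge> 0" .
    qed
    have IH: "fip n A' B \<ge> 0" by (rule Suc.IH[OF d kn sym' psdA' psdB zer'])
    define c where "c = (\<lambda>i. A i p)"
    have "fip n A B = fip n A' B + bil n B c c / A p p"
    proof -
      have "fip n A B = (\<Sum>i<n. \<Sum>j<n. A' i j * B i j + c i * B i j * c j / A p p)"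
        unfolding fip_def A'_def c_def
        by (intro sum.cong refl, use sym p in \<open>auto simp: field_simps\<close>)
      also have "\<dots> = fip n A' B + bil n B c c / A p p"
        unfolding fip_def bil_def by (simp add: sum.distrib sum_divide_distrib)
      finally show ?thesis .
    qed
    moreover have "bil n B c c / A p p \<ge> 0" using psdB pp by auto
    ultimately show ?thesis using IH by simp
  qed
qed

lemma fip_psd:
  assumes "\<forall>i<n. \<forall>j<n. A j i = A i j" "\<forall>v. bil n A v v \<ge> 0" "\<forall>v. bil n B v v \<ge> 0"
  shows "fip n A B \<ge> 0"
  by (rule fip_psd_aux[of n 0 n], use assms in auto)




definition mip :: "real mat \<Rightarrow> real mat \<Rightarrow> real" where
  "mip A B = (\<Sum>i<dim_row A. \<Sum>j<dim_col A. A$$(i,j) * B$$(i,j))"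

lemma mult_entry: assumes "A \<in> carrier_mat nr l" "B \<in> carrier_mat l nc" "i < nr" "j < nc"
  shows "(A * B) $$ (i,j) = (\<Sum>t<l. A$$(i,t) * B$$(t,j))"
  using assms by (simp add: scalar_prod_def atLeast0LessThan)

lemma mip_comm: "A \<in> carrier_mat nr nc \<Longrightarrow> B \<in> carrier_mat nr nc \<Longrightarrow> mip A B = mip B A"
  unfolding mip_def by (simp add: mult.commute)

lemma mip_add_left: "A \<in> carrier_mat nr nc \<Longrightarrow> B \<in> carrier_mat nr nc \<Longrightarrow> mip (A + B) C = mip A C + mip B C"
  unfolding mip_def by (simp add: distrib_right sum.distrib)
lemma mip_add_right: "A \<in> carrier_mat nr nc \<Longrightarrow> B \<in> carrier_mat nr nc \<Longrightarrow> C \<in> carrier_mat nr nc \<Longrightarrow> mip C (A + B) = mip C A + mip C B"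
  unfolding mip_def by (simp add: distrib_left sum.distrib)
lemma mip_minus_left: "A \<in> carrier_mat nr nc \<Longrightarrow> B \<in> carrier_mat nr nc \<Longrightarrow> mip (A - B) C = mip A C - mip B C"
  unfolding mip_def by (simp add: left_diff_distrib sum_subtractf)
lemma mip_minus_right: "A \<in> carrier_mat nr nc \<Longrightarrow> B \<in> carrier_mat nr nc \<Longrightarrow> C \<in> carrier_mat nr nc \<Longrightarrow> mip C (A - B) = mip C A - mip C B"
  unfolding mip_def by (simp add: right_diff_distrib sum_subtractf)
lemma mip_smult_left: "mip (k \<cdot>\<^sub>m A) C = k * mip A C"
  unfolding mip_def by (simp add: sum_distrib_left mult.assoc)
lemma mip_smult_right: "C \<in> carrier_mat nr nc \<Longrightarrow> A \<in> carrier_mat nr nc \<Longrightarrow> mip C (k \<cdot>\<^sub>m A) = k * mip C A"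
  unfolding mip_def by (simp add: sum_distrib_left ac_simps)

lemma mip_transpose: "A \<in> carrier_mat nr nc \<Longrightarrow> B \<in> carrier_mat nr nc \<Longrightarrow>
   mip (transpose_mat A) (transpose_mat B) = mip A B"
  unfolding mip_def by (simp, rule sum.swap)

lemma mip_mult_left:
  assumes A: "A \<in> carrier_mat k l" and B: "B \<in> carrier_mat l c" and C: "C \<in> carrier_mat k c"
  shows "mip (A * B) C = mip B (transpose_mat A * C)"
proof -
  have "mip (A * B) C = (\<Sum>i<k. \<Sum>j<c. (\<Sum>t<l. A$$(i,t) * B$$(t,j)) * C$$(i,j))"
  proof -
    have "dim_row (A * B) = k" "dim_col (A * B) = c" using A B by auto
    thus ?thesis unfolding mip_def using mult_entry[OF A B] by simp
  qed
  also have "\<dots> = (\<Sum>i<k. \<Sum>j<c. \<Sum>t<l. B$$(t,j) * (A$$(i,t) * C$$(i,j)))"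
    by (intro sum.cong refl, subst sum_distrib_right, intro sum.cong refl, simp)
  also have "\<dots> = (\<Sum>j<c. \<Sum>i<k. \<Sum>t<l. B$$(t,j) * (A$$(i,t) * C$$(i,j)))"
    by (rule sum.swap)
  also have "\<dots> = (\<Sum>j<c. \<Sum>t<l. \<Sum>i<k. B$$(t,j) * (A$$(i,t) * C$$(i,j)))"
    by (rule sum.cong[OF refl], rule sum.swap)
  also have "\<dots> = (\<Sum>t<l. \<Sum>j<c. \<Sum>i<k. B$$(t,j) * (A$$(i,t) * C$$(i,j)))"
    by (rule sum.swap)
  also have "\<dots> = (\<Sum>t<l. \<Sum>j<c. B$$(t,j) * (transpose_mat A * C)$$(t,j))"
  proof (intro sum.cong refl)
    fix t j assume "t \<in> {..<l}" "j \<in> {..<c}"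
    hence "(transpose_mat A * C)$$(t,j) = (\<Sum>i<k. A$$(i,t) * C$$(i,j))"
      using A C by (subst mult_entry[of _ l k _ c], auto)
    thus "(\<Sum>i<k. B $$ (t, j) * (A $$ (i, t) * C $$ (i, j))) = B $$ (t, j) * (transpose_mat A * C) $$ (t, j)"
      by (simp add: sum_distrib_left)
  qed
  also have "\<dots> = mip B (transpose_mat A * C)" unfolding mip_def using B by simp
  finally show ?thesis .
qed

lemma mip_mult_right:
  assumes A: "A \<in> carrier_mat k l" and B: "B \<in> carrier_mat l c" and C: "C \<in> carrier_mat k c"
  shows "mip (A * B) C = mip A (C * transpose_mat B)"
proof -
  have "mip (A * B) C = mip (transpose_mat (A * B)) (transpose_mat C)"
    using A B C by (simp add: mip_transpose[of _ k c])
  also have "transpose_mat (A * B) = transpose_mat B * transpose_mat A" using A B by (simp add: transpose_mult)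
  also have "mip \<dots> (transpose_mat C) = mip (transpose_mat A) (transpose_mat (transpose_mat B) * transpose_mat C)"
    using A B C by (intro mip_mult_left[of _ c l _ k], auto)
  also have "transpose_mat (transpose_mat B) * transpose_mat C = transpose_mat (C * transpose_mat B)"
    using B C by (simp add: transpose_mult)
  also have "mip (transpose_mat A) \<dots> = mip A (C * transpose_mat B)"
    using A B C by (intro mip_transpose, auto)
  finally show ?thesis .
qed

lemma frob_mip: "frob_norm A = sqrt (mip A A)"
  unfolding frob_norm_def mip_def by (simp add: power2_eq_square)

lemma mip_self_nonneg: "mip A A \<ge> 0"
  unfolding mip_def by (intro sum_nonneg, simp)

lemma mip_one: assumes "G \<in> carrier_mat n n" shows "mip (1\<^sub>m n) G = (\<Sum>i<n. G$$(i,i))"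
proof -
  have "mip (1\<^sub>m n) G = (\<Sum>i<n. \<Sum>j<n. (if i = j then G$$(i,j) else 0))"
    unfolding mip_def by (intro sum.cong refl, auto)
  also have "\<dots> = (\<Sum>i<n. G$$(i,i))" by (simp add: sum.delta)
  finally show ?thesis .
qed

lemma mip_fip: "A \<in> carrier_mat n n \<Longrightarrow> mip A B = fip n (\<lambda>i j. A$$(i,j)) (\<lambda>i j. B$$(i,j))"
  unfolding mip_def fip_def by simp

lemma quad_bil: assumes "X \<in> carrier_mat n n"
  shows "vec n f \<bullet> (X *\<^sub>v vec n f) = bil n (\<lambda>i j. X$$(i,j)) f f"
  using assms unfolding bil_def by (simp add: scalar_prod_def atLeast0LessThan sum_distrib_left ac_simps)

lemma quad_bil': assumes "X \<in> carrier_mat n n" "v \<in> carrier_vec n"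
  shows "v \<bullet> (X *\<^sub>v v) = bil n (\<lambda>i j. X$$(i,j)) (\<lambda>i. v$i) (\<lambda>i. v$i)"
proof -
  have "v = vec n (\<lambda>i. v$i)" using assms by auto
  thus ?thesis using quad_bil[OF assms(1)] by metis
qed

lemma psd_bil: assumes "psd_mat n X" shows "\<forall>f. bil n (\<lambda>i j. X$$(i,j)) f f \<ge> 0"
  using assms quad_bil[of X n] unfolding psd_mat_def sym_mat_def by (metis vec_carrier)

lemma psd_sym: assumes "psd_mat n X" shows "\<forall>i<n. \<forall>j<n. X$$(j,i) = X$$(i,j)"
proof (intro allI impI)
  fix i j assume "i < n" "j < n"
  moreover have "transpose_mat X = X" "X \<in> carrier_mat n n" using assms unfolding psd_mat_def sym_mat_def by auto
  ultimately show "X$$(j,i) = X$$(i,j)" by (metis carrier_matD index_transpose_mat(1))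
qed

lemma psd_mip_nonneg: assumes "psd_mat n A" "psd_mat n B" shows "mip A B \<ge> 0"
proof -
  have "A \<in> carrier_mat n n" using assms unfolding psd_mat_def sym_mat_def by auto
  thus ?thesis using fip_psd[OF psd_sym[OF assms(1)] psd_bil[OF assms(1)] psd_bil[OF assms(2)]]
    by (simp add: mip_fip)
qed




definition outer :: "real vec \<Rightarrow> real vec \<Rightarrow> real mat" where
  "outer x y = mat (dim_vec x) (dim_vec y) (\<lambda>(i,j). x$i * y$j)"

lemma outer_dims[simp]: "dim_row (outer x y) = dim_vec x" "dim_col (outer x y) = dim_vec y"
  unfolding outer_def by auto

lemma outer_carrier: "x \<in> carrier_vec n \<Longrightarrow> y \<in> carrier_vec m \<Longrightarrow> outer x y \<in> carrier_mat n m"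
  unfolding outer_def by auto

lemma outer_index[simp]: "i < dim_vec x \<Longrightarrow> j < dim_vec y \<Longrightarrow> outer x y $$ (i,j) = x$i * y$j"
  unfolding outer_def by auto

lemma outer_mult_vec: assumes "z \<in> carrier_vec (dim_vec y)"
  shows "outer x y *\<^sub>v z = (y \<bullet> z) \<cdot>\<^sub>v x"
proof (rule eq_vecI)
  fix i assume i: "i < dim_vec ((y \<bullet> z) \<cdot>\<^sub>v x)"
  hence "(outer x y *\<^sub>v z) $ i = (\<Sum>j\<in>{0..<dim_vec y}. x$i * y$j * z$j)"
    using assms by (simp add: scalar_prod_def row_def)
  also have "\<dots> = x$i * (y \<bullet> z)" using assms by (simp add: scalar_prod_def sum_distrib_left mult.assoc)
  finally show "(outer x y *\<^sub>v z) $ i = ((y \<bullet> z) \<cdot>\<^sub>v x) $ i" using i by simp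
qed (simp)

lemma mult_outer: assumes A: "A \<in> carrier_mat k n" and x: "x \<in> carrier_vec n"
  shows "A * outer x y = outer (A *\<^sub>v x) y"
proof (rule eq_matI)
  fix i j assume "i < dim_row (outer (A *\<^sub>v x) y)" "j < dim_col (outer (A *\<^sub>v x) y)"
  hence ij: "i < k" "j < dim_vec y" using A by auto
  have "(A * outer x y) $$ (i,j) = (\<Sum>t\<in>{0..<n}. A$$(i,t) * (x$t * y$j))"
    using A x ij by (simp add: scalar_prod_def)
  also have "\<dots> = (row A i \<bullet> x) * y$j" using A x ij
    by (simp add: scalar_prod_def sum_distrib_right, intro sum.cong refl, simp add: ac_simps)
  finally show "(A * outer x y) $$ (i,j) = outer (A *\<^sub>v x) y $$ (i,j)" using ij A by simp
qed (use A x in auto)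

lemma outer_mult: assumes B: "B \<in> carrier_mat m c" and y: "y \<in> carrier_vec m"
  shows "outer x y * B = outer x (transpose_mat B *\<^sub>v y)"
proof (rule eq_matI)
  fix i j assume "i < dim_row (outer x (transpose_mat B *\<^sub>v y))" "j < dim_col (outer x (transpose_mat B *\<^sub>v y))"
  hence ij: "i < dim_vec x" "j < c" using B by auto
  have "(outer x y * B) $$ (i,j) = (\<Sum>t\<in>{0..<m}. (x$i * y$t) * B$$(t,j))"
    using B y ij by (simp add: scalar_prod_def)
  also have "\<dots> = x$i * (col B j \<bullet> y)" using B y ij
    by (simp add: scalar_prod_def sum_distrib_left ac_simps)
  finally show "(outer x y * B) $$ (i,j) = outer x (transpose_mat B *\<^sub>v y) $$ (i,j)" using ij B by simp
qed (use B y in auto)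

lemma outer_smult_right: "outer x (k \<cdot>\<^sub>v w) = k \<cdot>\<^sub>m outer x w"
  by (rule eq_matI, auto)

lemma outer_smult_left: "outer (k \<cdot>\<^sub>v x) w = k \<cdot>\<^sub>m outer x w"
  by (rule eq_matI, auto)

lemma transpose_outer: "transpose_mat (outer x y) = outer y x"
  by (rule eq_matI, auto)

lemma outer_outer: assumes "y \<in> carrier_vec m" "z \<in> carrier_vec m" "w \<in> carrier_vec c"
  shows "outer x y * outer z w = (y \<bullet> z) \<cdot>\<^sub>m outer x w"
proof -
  have "outer x y * outer z w = outer x (outer w z *\<^sub>v y)"
    using assms by (simp add: outer_mult[OF outer_carrier[OF assms(2,3)]] transpose_outer)
  also have "outer w z *\<^sub>v y = (z \<bullet> y) \<cdot>\<^sub>v w" using assms by (simp add: outer_mult_vec)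
  also have "z \<bullet> y = y \<bullet> z" using assms comm_scalar_prod by blast
  finally show ?thesis by (simp add: outer_smult_right)
qed

lemma meas_outer: assumes "a \<in> carrier_vec n" "v \<in> carrier_vec n"
  shows "a \<bullet> (outer v v *\<^sub>v a) = (a \<bullet> v)^2"
proof -
  have "outer v v *\<^sub>v a = (v \<bullet> a) \<cdot>\<^sub>v v" using assms by (simp add: outer_mult_vec)
  moreover have "v \<bullet> a = a \<bullet> v" using assms comm_scalar_prod by blast
  ultimately show ?thesis using assms by (simp add: power2_eq_square)
qed

lemma sym_outer: "v \<in> carrier_vec n \<Longrightarrow> sym_mat n (outer v v)"
  unfolding sym_mat_def by (simp add: outer_carrier transpose_outer)




declare minus_carrier_mat[simp]

lemma nuc_list: "sum_mset (image_mset sqrt (proots (\<Prod>a\<leftarrow>ds. [:- a, 1:]))) = sum_list (map sqrt (ds :: real list))"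
proof (induction ds)
  case Nil thus ?case by simp
next
  case (Cons d ds)
  have lin: "[:- a, 1:] \<noteq> (0 :: real poly)" for a by simp
  have nz: "(\<Prod>a\<leftarrow>ds. [:- a, 1:]) \<noteq> (0 :: real poly)"
    using lin by (auto simp: prod_list_zero_iff)
  have "(\<Prod>a\<leftarrow>d # ds. [:- a, 1:]) = [:- d, 1:] * (\<Prod>a\<leftarrow>ds. [:- a, 1:])" by simp
  hence "proots (\<Prod>a\<leftarrow>d # ds. [:- a, 1:]) = proots [:- d, 1:] + proots (\<Prod>a\<leftarrow>ds. [:- a, 1:])"
    using proots_mult[OF lin nz] by simp
  also have "proots [:- d, 1:] = {#d#}" using proots_linear_factor[of "-d"] by simp
  finally show ?case using Cons by simp
qed

lemma nuc_ut: assumes E: "E \<in> carrier_mat n n" and ut: "upper_triangular E"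
  shows "sum_mset (image_mset sqrt (proots (char_poly E))) = (\<Sum>i<n. sqrt (E$$(i,i)))"
proof -
  have "char_poly E = (\<Prod>a\<leftarrow>diag_mat E. [:- a, 1:])" by (rule char_poly_upper_triangular[OF E ut])
  hence "sum_mset (image_mset sqrt (proots (char_poly E))) = sum_list (map sqrt (diag_mat E))"
    using nuc_list by simp
  also have "\<dots> = sum_list (map (\<lambda>i. sqrt (E$$(i,i))) [0..<n])" using E unfolding diag_mat_def by (simp add: o_def)
  also have "\<dots> = (\<Sum>i<n. sqrt (E$$(i,i)))"
    by (simp add: sum_set_upt_conv_sum_list_nat[symmetric] atLeast0LessThan)
  finally show ?thesis .
qed

lemma self_scalar_zero: assumes "w \<in> carrier_vec n" "w \<bullet> w = (0::real)" shows "w = 0\<^sub>v n"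
proof (rule eq_vecI)
  have "(\<Sum>i\<in>{0..<n}. w$i * w$i) = 0" using assms by (simp add: scalar_prod_def)
  hence "\<forall>i\<in>{0..<n}. w$i * w$i = 0" by (subst sum_nonneg_eq_0_iff[symmetric], auto)
  thus "\<And>i. i < dim_vec (0\<^sub>v n) \<Longrightarrow> w $ i = 0\<^sub>v n $ i" by auto
qed (use assms in auto)

lemma smult_mat_mult_vec: "A \<in> carrier_mat nr nc \<Longrightarrow> v \<in> carrier_vec nc \<Longrightarrow> (k \<cdot>\<^sub>m A) *\<^sub>v v = k \<cdot>\<^sub>v (A *\<^sub>v v)"
  by (rule eq_vecI, auto simp: scalar_prod_def sum_distrib_left ac_simps)

lemma householder:
  assumes u: "u \<in> carrier_vec n" and uu: "u \<bullet> u = (1::real)" and n: "0 < n"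
  shows "\<exists>Hh \<in> carrier_mat n n. Hh * Hh = 1\<^sub>m n \<and> transpose_mat Hh = Hh \<and> Hh *\<^sub>v unit_vec n 0 = u"
proof -
  define e where "e = (unit_vec n 0 :: real vec)"
  have e: "e \<in> carrier_vec n" unfolding e_def by simp
  define w where "w = e - u"
  have w: "w \<in> carrier_vec n" unfolding w_def using e u by simp
  show ?thesis
  proof (cases "w = 0\<^sub>v n")
    case True
    have "u = e"
    proof (rule eq_vecI)
      fix i assume "i < dim_vec e"
      hence "w $ i = 0" using True e by simp
      thus "u $ i = e $ i" unfolding w_def using \<open>i < dim_vec e\<close> e u by simp
    qed (use e u in auto)
    thus ?thesis by (intro bexI[of _ "1\<^sub>m n"], auto simp: e_def)
  next
    case False
    define s where "s = w \<bullet> w"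
    have ee: "e \<bullet> e = 1" unfolding e_def using n by simp
    have eu: "e \<bullet> u = u $ 0" unfolding e_def using n u by simp
    have ue: "u \<bullet> e = u $ 0" unfolding e_def using n u by simp
    have s_eq: "s = 2 - 2 * u$0"
      unfolding s_def w_def using e u ee eu ue uu
      by (simp add: minus_scalar_prod_distrib scalar_prod_minus_distrib)
    have we: "w \<bullet> e = 1 - u$0"
      unfolding w_def using e u ee ue by (simp add: minus_scalar_prod_distrib)
    have s0: "s \<noteq> 0" using self_scalar_zero[OF w] False unfolding s_def by auto
    define c where "c = 2 / s"
    define W where "W = outer w w"
    have W: "W \<in> carrier_mat n n" unfolding W_def using outer_carrier[OF w w] .
    define Hh where "Hh = 1\<^sub>m n - c \<cdot>\<^sub>m W"
    have Hh: "Hh \<in> carrier_mat n n" unfolding Hh_def using W by simp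
    have WW: "W * W = s \<cdot>\<^sub>m W" unfolding W_def s_def using outer_outer[OF w w w] .
    have "Hh * Hh = 1\<^sub>m n * Hh - (c \<cdot>\<^sub>m W) * Hh" unfolding Hh_def[of] 
      using W by (subst minus_mult_distrib_mat[of _ n n], auto)
    also have "(c \<cdot>\<^sub>m W) * Hh = c \<cdot>\<^sub>m W - c \<cdot>\<^sub>m (c \<cdot>\<^sub>m (s \<cdot>\<^sub>m W))"
    proof -
      have "(c \<cdot>\<^sub>m W) * Hh = (c \<cdot>\<^sub>m W) * 1\<^sub>m n - (c \<cdot>\<^sub>m W) * (c \<cdot>\<^sub>m W)"
        unfolding Hh_def using W by (intro mult_minus_distrib_mat[of _ n n], auto)
      also have "(c \<cdot>\<^sub>m W) * 1\<^sub>m n = c \<cdot>\<^sub>m W" using W by simp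
      also have "(c \<cdot>\<^sub>m W) * (c \<cdot>\<^sub>m W) = c \<cdot>\<^sub>m (c \<cdot>\<^sub>m (W * W))"
        using W by (simp add: mult_smult_assoc_mat[of _ n n] mult_smult_distrib[of _ n n])
      finally show ?thesis using WW by simp
    qed
    also have "1\<^sub>m n * Hh - (c \<cdot>\<^sub>m W - c \<cdot>\<^sub>m (c \<cdot>\<^sub>m (s \<cdot>\<^sub>m W))) = 1\<^sub>m n"
    proof (rule eq_matI)
      fix i j assume ij: "i < dim_row (1\<^sub>m n)" "j < dim_col (1\<^sub>m n)"
      have "c * (c * (s * W$$(i,j))) = 2 * c * W$$(i,j)" unfolding c_def using s0 by (simp add: field_simps)
      thus "(1\<^sub>m n * Hh - (c \<cdot>\<^sub>m W - c \<cdot>\<^sub>m (c \<cdot>\<^sub>m (s \<cdot>\<^sub>m W)))) $$ (i, j) = 1\<^sub>m n $$ (i, j)"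
        using ij W Hh unfolding Hh_def by (simp add: algebra_simps)
    qed (use W Hh in auto)
    finally have OO: "Hh * Hh = 1\<^sub>m n" .
    have OT: "transpose_mat Hh = Hh"
      unfolding Hh_def W_def by (rule eq_matI, use w in auto)
    have "Hh *\<^sub>v e = e - c \<cdot>\<^sub>v (W *\<^sub>v e)"
      unfolding Hh_def using W e by (simp add: minus_mult_distrib_mat_vec[of _ n n] smult_mat_mult_vec[of _ n n])
    also have "W *\<^sub>v e = (w \<bullet> e) \<cdot>\<^sub>v w" unfolding W_def using e w by (simp add: outer_mult_vec)
    also have "c \<cdot>\<^sub>v ((w \<bullet> e) \<cdot>\<^sub>v w) = w"
      unfolding c_def we s_eq using s0 s_eq by (intro eq_vecI, auto simp: field_simps)
    also have "e - w = u" unfolding w_def by (rule eq_vecI, use e u in auto)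
    finally show ?thesis using Hh OO OT unfolding e_def by blast
  qed
qed


lemma nuc_outer:
  assumes v: "v \<in> carrier_vec n"
  shows "nuclear_norm (outer v v) = v \<bullet> v"
proof -
  define X where "X = outer v v"
  have X: "X \<in> carrier_mat n n" unfolding X_def using outer_carrier[OF v v] .
  have XX: "transpose_mat X * X = (v \<bullet> v) \<cdot>\<^sub>m X"
    unfolding X_def transpose_outer using outer_outer[OF v v v] .
  have vv0: "v \<bullet> v \<ge> 0" using v by (simp add: scalar_prod_def sum_nonneg)
  show ?thesis
  proof (cases "v \<bullet> v = 0")
    case True
    define E where "E = transpose_mat X * X"
    have E: "E \<in> carrier_mat n n" unfolding E_def using X by simp
    have E0: "E $$ (i,j) = 0" if "i < n" "j < n" for i j
      unfolding E_def XX True using that X by simp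
    have ut: "upper_triangular E" unfolding upper_triangular_def using E E0 by auto
    have "nuclear_norm X = (\<Sum>i<n. sqrt (E$$(i,i)))"
      unfolding nuclear_norm_def singular_values_def E_def[symmetric] using nuc_ut[OF E ut] .
    also have "\<dots> = 0" using E0 by simp
    finally show ?thesis using True X_def by simp
  next
    case False
    have pos: "v \<bullet> v > 0" using False vv0 by simp
    have n: "0 < n"
    proof (rule ccontr)
      assume "\<not> 0 < n" hence "n = 0" by simp
      thus False using pos v by (simp add: scalar_prod_def)
    qed
    define L where "L = sqrt (v \<bullet> v)"
    have L: "L > 0" "L * L = v \<bullet> v" unfolding L_def using pos by auto
    define u where "u = (1 / L) \<cdot>\<^sub>v v"
    have u: "u \<in> carrier_vec n" unfolding u_def using v by simp
    have uu: "u \<bullet> u = 1" unfolding u_def using v L pos by (simp add: field_simps)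
    have vu: "v = L \<cdot>\<^sub>v u" unfolding u_def using L by (intro eq_vecI, auto)
    obtain Hh where Hh: "Hh \<in> carrier_mat n n" "Hh * Hh = 1\<^sub>m n" "transpose_mat Hh = Hh"
      "Hh *\<^sub>v unit_vec n 0 = u" using householder[OF u uu n] by blast
    define e where "e = (unit_vec n 0 :: real vec)"
    have e: "e \<in> carrier_vec n" unfolding e_def by simp
    define E where "E = ((v \<bullet> v) * (v \<bullet> v)) \<cdot>\<^sub>m outer e e"
    have E: "E \<in> carrier_mat n n" unfolding E_def using outer_carrier[OF e e] by simp
    have "X = (L * L) \<cdot>\<^sub>m outer u u" unfolding X_def vu
      by (simp add: outer_smult_left outer_smult_right, rule eq_matI, auto)
    hence XTX: "transpose_mat X * X = ((v \<bullet> v) * (v \<bullet> v)) \<cdot>\<^sub>m outer u u"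
      unfolding XX L(2) by (rule_tac eq_matI, auto)
    have "Hh * outer e e * Hh = outer u u"
      using Hh e unfolding e_def
      by (simp add: mult_outer[of _ n n] outer_mult[of _ n n])
    hence "Hh * E * Hh = transpose_mat X * X"
    proof -
      assume h: "Hh * outer e e * Hh = outer u u"
      have oe: "outer e e \<in> carrier_mat n n" using outer_carrier[OF e e] .
      have "Hh * E = ((v \<bullet> v) * (v \<bullet> v)) \<cdot>\<^sub>m (Hh * outer e e)"
        unfolding E_def using Hh(1) oe by (rule mult_smult_distrib)
      hence "Hh * E * Hh = ((v \<bullet> v) * (v \<bullet> v)) \<cdot>\<^sub>m (Hh * outer e e * Hh)"
        using Hh(1) oe by (simp add: mult_smult_assoc_mat[of _ n n])
      thus ?thesis unfolding XTX h .
    qed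
    hence sim: "similar_mat (transpose_mat X * X) E"
      unfolding similar_mat_def similar_mat_wit_def using Hh E X
      by (intro exI[of _ Hh], auto simp: Let_def)
    have ut: "upper_triangular E" unfolding upper_triangular_def E_def e_def using n by auto
    have "nuclear_norm X = (\<Sum>i<n. sqrt (E$$(i,i)))"
      unfolding nuclear_norm_def singular_values_def char_poly_similar[OF sim] using nuc_ut[OF E ut] .
    also have "\<dots> = (\<Sum>i\<in>{0}. sqrt (E$$(i,i)))"
      by (rule sum.mono_neutral_right, use n in \<open>auto simp: E_def e_def\<close>)
    also have "\<dots> = v \<bullet> v" unfolding E_def e_def using n vv0 by (simp add: real_sqrt_mult)
    finally show ?thesis unfolding X_def .
  qed
qed




lemma assoc_d: "dim_col A = dim_row B \<Longrightarrow> dim_col B = dim_row C \<Longrightarrow> A * B * C = A * (B * C)"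
  by (rule assoc_mult_mat[of A "dim_row A" "dim_col A" B "dim_col B" C "dim_col C"], auto)
lemma mult_minus_d: fixes A :: "real mat"
  shows "dim_col A = dim_row B \<Longrightarrow> dim_row B = dim_row C \<Longrightarrow> dim_col B = dim_col C \<Longrightarrow> A * (B - C) = A * B - A * C"
  by (rule mult_minus_distrib_mat[of A "dim_row A" "dim_col A" B "dim_col B"], auto)
lemma minus_mult_d: fixes A :: "real mat"
  shows "dim_row A = dim_row B \<Longrightarrow> dim_col A = dim_col B \<Longrightarrow> dim_col A = dim_row C \<Longrightarrow> (A - B) * C = A * C - B * C"
  by (rule minus_mult_distrib_mat[of A "dim_row A" "dim_col A" B C "dim_col C"], auto)
lemma mult_plus_d: fixes A :: "real mat"
  shows "dim_col A = dim_row B \<Longrightarrow> dim_row B = dim_row C \<Longrightarrow> dim_col B = dim_col C \<Longrightarrow> A * (B + C) = A * B + A * C"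
  by (rule mult_add_distrib_mat[of A "dim_row A" "dim_col A" B "dim_col B"], auto)
lemma plus_mult_d: fixes A :: "real mat"
  shows "dim_row A = dim_row B \<Longrightarrow> dim_col A = dim_col B \<Longrightarrow> dim_col A = dim_row C \<Longrightarrow> (A + B) * C = A * C + B * C"
  by (rule add_mult_distrib_mat[of A "dim_row A" "dim_col A" B C "dim_col C"], auto)
lemma mult_smult_d: fixes A :: "real mat"
  shows "dim_col A = dim_row B \<Longrightarrow> A * (k \<cdot>\<^sub>m B) = k \<cdot>\<^sub>m (A * B)"
  by (rule mult_smult_distrib[of A "dim_row A" "dim_col A" B "dim_col B"], auto)
lemma smult_mult_d: fixes A :: "real mat"
  shows "dim_col A = dim_row B \<Longrightarrow> (k \<cdot>\<^sub>m A) * B = k \<cdot>\<^sub>m (A * B)"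
  by (rule mult_smult_assoc_mat[of A "dim_row A" "dim_col A" B "dim_col B"], auto)
lemma transpose_mult_d: fixes A :: "real mat"
  shows "dim_col A = dim_row B \<Longrightarrow> transpose_mat (A * B) = transpose_mat B * transpose_mat A"
  by (rule transpose_mult[of A "dim_row A" "dim_col A" B "dim_col B"], auto)
lemma transpose_minus_d: fixes A :: "real mat"
  shows "dim_row A = dim_row B \<Longrightarrow> dim_col A = dim_col B \<Longrightarrow> transpose_mat (A - B) = transpose_mat A - transpose_mat B"
  by (rule eq_matI, auto)
lemma transpose_plus_d: fixes A :: "real mat"
  shows "dim_row A = dim_row B \<Longrightarrow> dim_col A = dim_col B \<Longrightarrow> transpose_mat (A + B) = transpose_mat A + transpose_mat B"
  by (rule eq_matI, auto)
lemma transpose_smult: "transpose_mat (k \<cdot>\<^sub>m A) = k \<cdot>\<^sub>m transpose_mat (A :: real mat)"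
  by (rule eq_matI, auto)

lemma assoc_mv_d: "dim_col A = dim_row B \<Longrightarrow> dim_col B = dim_vec v \<Longrightarrow> (A * B) *\<^sub>v v = A *\<^sub>v (B *\<^sub>v v)"
  by (rule assoc_mult_mat_vec[of A "dim_row A" "dim_col A" B "dim_col B" v], auto)

lemmas mat_norm = assoc_d mult_minus_d minus_mult_d mult_plus_d plus_mult_d mult_smult_d smult_mult_d
  transpose_mult_d transpose_minus_d transpose_plus_d transpose_smult

lemma half_mat: "(M::real mat) - (1/2) \<cdot>\<^sub>m M = (1/2) \<cdot>\<^sub>m M"
  by (rule eq_matI, auto)

lemma U_facts:
  fixes U :: "real mat"
  assumes U: "U \<in> carrier_mat n r" and UU: "transpose_mat U * U = 1\<^sub>m r"
  defines "Q \<equiv> 1\<^sub>m n - U * transpose_mat U"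
  shows "Q \<in> carrier_mat n n" "transpose_mat Q = Q" "Q * Q = Q" "Q * U = 0\<^sub>m n r"
    "transpose_mat U * Q = 0\<^sub>m r n"
proof -
  have d[simp]: "dim_row U = n" "dim_col U = r" using U by auto
  have UU': "transpose_mat U * (U * B) = B" if "dim_row B = r" for B
    using that by (simp add: assoc_d[symmetric] UU)
  show Q: "Q \<in> carrier_mat n n" unfolding Q_def using U by simp
  show "transpose_mat Q = Q" unfolding Q_def by (simp add: mat_norm)
  show "Q * Q = Q" unfolding Q_def by (simp add: mat_norm UU', rule eq_matI, auto)
  show "Q * U = 0\<^sub>m n r" unfolding Q_def by (simp add: mat_norm UU' UU, rule eq_matI, auto)
  show "transpose_mat U * Q = 0\<^sub>m r n" unfolding Q_def by (simp add: mat_norm UU'[of "transpose_mat U", simplified], rule eq_matI, auto)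
qed


lemma tangent_decomp:
  fixes U H :: "real mat"
  assumes U: "U \<in> carrier_mat n r" and UU: "transpose_mat U * U = 1\<^sub>m r"
    and H: "H \<in> carrier_mat n n" and HT: "transpose_mat H = H"
  defines "Q \<equiv> 1\<^sub>m n - U * transpose_mat U"
  defines "Z \<equiv> H * U - (1/2) \<cdot>\<^sub>m (U * (transpose_mat U * H * U))"
  shows "H - Q * H * Q = U * transpose_mat Z + Z * transpose_mat U"
    "transpose_mat Z * U = (1/2) \<cdot>\<^sub>m (transpose_mat U * H * U)"
    "Z \<in> carrier_mat n r"
proof -
  have d[simp]: "dim_row U = n" "dim_col U = r" "dim_row H = n" "dim_col H = n" using U H by auto
  have UU': "transpose_mat U * (U * B) = B" if "dim_row B = r" for B
    using that by (simp add: assoc_d[symmetric] UU)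
  show "H - Q * H * Q = U * transpose_mat Z + Z * transpose_mat U"
    unfolding Q_def Z_def apply (simp add: mat_norm UU' UU HT)
    apply (rule eq_matI) apply (simp_all del: index_mult_mat(1) add: index_mult_mat(2,3))
    done
  show "transpose_mat Z * U = (1/2) \<cdot>\<^sub>m (transpose_mat U * H * U)"
    unfolding Z_def apply (simp add: mat_norm UU' UU HT) by (rule half_mat)
  show "Z \<in> carrier_mat n r" unfolding Z_def by (rule minus_carrier_mat, rule smult_carrier_mat, rule carrier_matI, auto)
qed

lemma mip_QAQ:
  fixes Q A B :: "real mat"
  assumes Q: "Q \<in> carrier_mat n n" and QT: "transpose_mat Q = Q" and A: "A \<in> carrier_mat n n"
    and B: "B \<in> carrier_mat n n"
  shows "mip (Q * A * Q) B = mip A (Q * B * Q)"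
proof -
  have "mip (Q * A * Q) B = mip (Q * (A * Q)) B" using Q A by simp
  also have "\<dots> = mip (A * Q) (transpose_mat Q * B)" using Q A B by (intro mip_mult_left, auto)
  also have "\<dots> = mip A (transpose_mat Q * B * transpose_mat Q)" using Q A B by (intro mip_mult_right, auto)
  finally show ?thesis unfolding QT .
qed

lemma QQ_idem:
  fixes Q A :: "real mat"
  assumes Q: "Q \<in> carrier_mat n n" and QQ: "Q * Q = Q" and A: "A \<in> carrier_mat n n"
  shows "Q * (Q * A * Q) * Q = Q * A * Q"
proof -
  have d[simp]: "dim_row Q = n" "dim_col Q = n" "dim_row A = n" "dim_col A = n" using Q A by auto
  have QQ': "Q * (Q * B) = Q * B" if "dim_row B = n" for B
    using that by (simp add: assoc_d[symmetric] QQ)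
  show ?thesis by (simp add: assoc_d QQ QQ')
qed

lemma psd_QXQ:
  fixes Q X :: "real mat"
  assumes Q: "Q \<in> carrier_mat n n" and QT: "transpose_mat Q = Q" and X: "psd_mat n X"
  shows "psd_mat n (Q * X * Q)"
proof -
  have Xc: "X \<in> carrier_mat n n" and XT: "transpose_mat X = X" using X unfolding psd_mat_def sym_mat_def by auto
  have sym: "sym_mat n (Q * X * Q)" unfolding sym_mat_def using Q Xc
    by (simp add: mat_norm QT XT)
  have "v \<bullet> ((Q * X * Q) *\<^sub>v v) \<ge> 0" if v: "v \<in> carrier_vec n" for v
  proof -
    have "(Q * X * Q) *\<^sub>v v = Q *\<^sub>v (X *\<^sub>v (Q *\<^sub>v v))" using Q Xc v by (simp add: assoc_mv_d)
    hence "v \<bullet> ((Q * X * Q) *\<^sub>v v) = (transpose_mat Q *\<^sub>v v) \<bullet> (X *\<^sub>v (Q *\<^sub>v v))"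
      using Q Xc v by (simp add: transpose_vec_mult_scalar[of Q n n])
    also have "\<dots> = (Q *\<^sub>v v) \<bullet> (X *\<^sub>v (Q *\<^sub>v v))" unfolding QT ..
    also have "\<dots> \<ge> 0" using X Q v unfolding psd_mat_def by simp
    finally show ?thesis .
  qed
  thus ?thesis using sym unfolding psd_mat_def by auto
qed




lemma rank_one_bound:
  assumes fin: "finite I" and cI: "card I > 0" and a: "\<forall>i\<in>I. a i \<in> carrier_vec n"
    and hyp: "\<forall>X. sym_mat n X \<longrightarrow> meas_l1 a I X / real (card I) \<le> (1 + 1/10) * nuclear_norm X"
    and v: "v \<in> carrier_vec n"
  shows "(\<Sum>i\<in>I. (a i \<bullet> v)^2) \<le> 11/10 * real (card I) * (v \<bullet> v)"
proof -
  have "meas_l1 a I (outer v v) / real (card I) \<le> (1 + 1/10) * nuclear_norm (outer v v)"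
    using hyp sym_outer[OF v] by blast
  moreover have "meas_l1 a I (outer v v) = (\<Sum>i\<in>I. (a i \<bullet> v)^2)"
    unfolding meas_l1_def meas_def using a v by (intro sum.cong refl, subst meas_outer[of _ n], auto)
  moreover have "nuclear_norm (outer v v) = v \<bullet> v" using nuc_outer[OF v] .
  ultimately have "(\<Sum>i\<in>I. (a i \<bullet> v)^2) / real (card I) \<le> 11/10 * (v \<bullet> v)" by simp
  thus ?thesis using cI by (simp add: divide_le_eq mult.commute mult.left_commute)
qed

lemma mip_meas_adj:
  assumes X: "X \<in> carrier_mat n n" and a: "\<forall>i<m. a i \<in> carrier_vec n"
  shows "mip (meas_adj n m a \<mu>) X = (\<Sum>i<m. \<mu> i * meas a X i)"
proof -
  have "mip (meas_adj n m a \<mu>) X = (\<Sum>j<n. \<Sum>k<n. (\<Sum>i<m. \<mu> i * (a i $ j) * (a i $ k)) * X$$(j,k))"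
    unfolding mip_def meas_adj_def by simp
  also have "\<dots> = (\<Sum>j<n. \<Sum>k<n. \<Sum>i<m. \<mu> i * ((a i $ j) * X$$(j,k) * (a i $ k)))"
    by (intro sum.cong refl, subst sum_distrib_right, intro sum.cong refl, simp)
  also have "\<dots> = (\<Sum>j<n. \<Sum>i<m. \<Sum>k<n. \<mu> i * ((a i $ j) * X$$(j,k) * (a i $ k)))"
    by (rule sum.cong[OF refl], rule sum.swap)
  also have "\<dots> = (\<Sum>i<m. \<Sum>j<n. \<Sum>k<n. \<mu> i * ((a i $ j) * X$$(j,k) * (a i $ k)))"
    by (rule sum.swap)
  also have "\<dots> = (\<Sum>i<m. \<mu> i * meas a X i)"
  proof (intro sum.cong refl)
    fix i assume "i \<in> {..<m}"
    hence ai: "a i \<in> carrier_vec n" using a by auto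
    have "meas a X i = bil n (\<lambda>j k. X$$(j,k)) (\<lambda>j. a i $ j) (\<lambda>j. a i $ j)"
      unfolding meas_def using quad_bil'[OF X ai] .
    thus "(\<Sum>j<n. \<Sum>k<n. \<mu> i * (a i $ j * X $$ (j, k) * a i $ k)) = \<mu> i * meas a X i"
      unfolding bil_def by (simp add: sum_distrib_left)
  qed
  finally show ?thesis .
qed

lemma meas_minus: assumes "a i \<in> carrier_vec n" "A \<in> carrier_mat n n" "B \<in> carrier_mat n n"
  shows "meas a (A - B) i = meas a A i - meas a B i"
  unfolding meas_def using assms by (simp add: minus_mult_distrib_mat_vec[of _ n n] scalar_prod_minus_distrib)

lemma meas_plus: assumes "a i \<in> carrier_vec n" "A \<in> carrier_mat n n" "B \<in> carrier_mat n n"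
  shows "meas a (A + B) i = meas a A i + meas a B i"
  unfolding meas_def using assms by (simp add: add_mult_distrib_mat_vec[of _ n n] scalar_prod_add_distrib[of _ n])

lemma meas_tangent:
  assumes U: "U \<in> carrier_mat n r" and Z: "Z \<in> carrier_mat n r" and a: "a i \<in> carrier_vec n"
  shows "meas a (U * transpose_mat Z + Z * transpose_mat U) i
       = 2 * (\<Sum>k<r. (col U k \<bullet> a i) * (col Z k \<bullet> a i))"
proof -
  let ?x = "a i"
  have "meas a (U * transpose_mat Z + Z * transpose_mat U) i
     = ?x \<bullet> (U *\<^sub>v (transpose_mat Z *\<^sub>v ?x)) + ?x \<bullet> (Z *\<^sub>v (transpose_mat U *\<^sub>v ?x))"
    unfolding meas_def using U Z a
    by (simp add: add_mult_distrib_mat_vec[of _ n n] scalar_prod_add_distrib[of _ n] assoc_mv_d)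
  also have "?x \<bullet> (U *\<^sub>v (transpose_mat Z *\<^sub>v ?x)) = (transpose_mat U *\<^sub>v ?x) \<bullet> (transpose_mat Z *\<^sub>v ?x)"
    using U Z a by (simp add: transpose_vec_mult_scalar[of U n r])
  also have "?x \<bullet> (Z *\<^sub>v (transpose_mat U *\<^sub>v ?x)) = (transpose_mat Z *\<^sub>v ?x) \<bullet> (transpose_mat U *\<^sub>v ?x)"
    using U Z a by (simp add: transpose_vec_mult_scalar[of Z n r])
  also have "(transpose_mat Z *\<^sub>v ?x) \<bullet> (transpose_mat U *\<^sub>v ?x) = (transpose_mat U *\<^sub>v ?x) \<bullet> (transpose_mat Z *\<^sub>v ?x)"
    using U Z a by (intro comm_scalar_prod[of _ r], auto)
  also have "(transpose_mat U *\<^sub>v ?x) \<bullet> (transpose_mat Z *\<^sub>v ?x) = (\<Sum>k<r. (col U k \<bullet> ?x) * (col Z k \<bullet> ?x))"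
    using U Z a by (simp add: scalar_prod_def atLeast0LessThan)
  finally show ?thesis by simp
qed

lemma mip_col: assumes Z: "Z \<in> carrier_mat n r"
  shows "mip Z Z = (\<Sum>k<r. col Z k \<bullet> col Z k)"
proof -
  have "mip Z Z = (\<Sum>i<n. \<Sum>k<r. Z$$(i,k) * Z$$(i,k))" unfolding mip_def using Z by simp
  also have "\<dots> = (\<Sum>k<r. \<Sum>i<n. Z$$(i,k) * Z$$(i,k))" by (rule sum.swap)
  also have "\<dots> = (\<Sum>k<r. col Z k \<bullet> col Z k)" using Z by (intro sum.cong refl, simp add: scalar_prod_def atLeast0LessThan)
  finally show ?thesis .
qed

lemma amgm: "s > 0 \<Longrightarrow> 2 * \<bar>x * y\<bar> \<le> x^2 / s + s * y^2" for s x y :: real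
proof -
  assume s: "s > 0"
  have "0 \<le> (\<bar>x\<bar> - s * \<bar>y\<bar>)^2 / s" using s by simp
  also have "(\<bar>x\<bar> - s * \<bar>y\<bar>)^2 / s = x^2 / s + s * y^2 - 2 * \<bar>x * y\<bar>"
    using s by (simp add: power2_eq_square field_simps abs_mult)
  finally show ?thesis by simp
qed


lemma S_bound:
  assumes U: "U \<in> carrier_mat n r" and UU: "transpose_mat U * U = 1\<^sub>m r" and Z: "Z \<in> carrier_mat n r"
    and a: "\<forall>i\<in>S. a i \<in> carrier_vec n"
    and ro: "\<And>v. v \<in> carrier_vec n \<Longrightarrow> (\<Sum>i\<in>S. (a i \<bullet> v)^2) \<le> K * (v \<bullet> v)"
    and s: "s > 0"
  shows "(\<Sum>i\<in>S. \<bar>meas a (U * transpose_mat Z + Z * transpose_mat U) i\<bar>) \<le> K * (real r / s + s * mip Z Z)"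
proof -
  define \<alpha> where "\<alpha> i k = col U k \<bullet> a i" for i k
  define \<beta> where "\<beta> i k = col Z k \<bullet> a i" for i k
  have step: "\<bar>meas a (U * transpose_mat Z + Z * transpose_mat U) i\<bar> \<le> (\<Sum>k<r. (\<alpha> i k)^2 / s + s * (\<beta> i k)^2)"
    if i: "i \<in> S" for i
  proof -
    have "\<bar>meas a (U * transpose_mat Z + Z * transpose_mat U) i\<bar> = \<bar>2 * (\<Sum>k<r. \<alpha> i k * \<beta> i k)\<bar>"
      unfolding \<alpha>_def \<beta>_def using meas_tangent[OF U Z, of a i] a i by simp
    also have "\<dots> \<le> (\<Sum>k<r. 2 * \<bar>\<alpha> i k * \<beta> i k\<bar>)"
    proof -
      have "\<bar>\<Sum>k<r. \<alpha> i k * \<beta> i k\<bar> \<le> (\<Sum>k<r. \<bar>\<alpha> i k * \<beta> i k\<bar>)" by (rule sum_abs)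
      hence "\<bar>2 * (\<Sum>k<r. \<alpha> i k * \<beta> i k)\<bar> \<le> 2 * (\<Sum>k<r. \<bar>\<alpha> i k * \<beta> i k\<bar>)"
        by (simp add: abs_mult)
      thus ?thesis by (simp add: sum_distrib_left)
    qed
    also have "\<dots> \<le> (\<Sum>k<r. (\<alpha> i k)^2 / s + s * (\<beta> i k)^2)"
      by (intro sum_mono amgm[OF s])
    finally show ?thesis .
  qed
  have "(\<Sum>i\<in>S. \<bar>meas a (U * transpose_mat Z + Z * transpose_mat U) i\<bar>)
      \<le> (\<Sum>i\<in>S. \<Sum>k<r. (\<alpha> i k)^2 / s + s * (\<beta> i k)^2)"
    by (intro sum_mono step)
  also have "\<dots> = (\<Sum>k<r. (\<Sum>i\<in>S. (\<alpha> i k)^2) / s + s * (\<Sum>i\<in>S. (\<beta> i k)^2))"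
    by (subst sum.swap, simp add: sum.distrib sum_divide_distrib sum_distrib_left)
  also have "\<dots> \<le> (\<Sum>k<r. K / s + s * (K * (col Z k \<bullet> col Z k)))"
  proof (intro sum_mono add_mono)
    fix k assume k: "k \<in> {..<r}"
    have cU: "col U k \<in> carrier_vec n" unfolding carrier_vec_def using U by simp
    have cZ: "col Z k \<in> carrier_vec n" unfolding carrier_vec_def using Z by simp
    have uu: "col U k \<bullet> col U k = 1"
    proof -
      have kr: "k < r" using k by simp
      have "(transpose_mat U * U) $$ (k,k) = row (transpose_mat U) k \<bullet> col U k" using U kr by simp
      also have "row (transpose_mat U) k = col U k" using U kr by simp
      finally show ?thesis unfolding UU using kr by simp
    qed
    have "(\<Sum>i\<in>S. (\<alpha> i k)^2) = (\<Sum>i\<in>S. (a i \<bullet> col U k)^2)"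
      unfolding \<alpha>_def using a cU comm_scalar_prod[of "col U k" n] by (intro sum.cong refl, simp)
    also have "\<dots> \<le> K * (col U k \<bullet> col U k)" by (rule ro[OF cU])
    finally show "(\<Sum>i\<in>S. (\<alpha> i k)^2) / s \<le> K / s" using uu s by (simp add: divide_right_mono)
    have "(\<Sum>i\<in>S. (\<beta> i k)^2) = (\<Sum>i\<in>S. (a i \<bullet> col Z k)^2)"
      unfolding \<beta>_def using a cZ comm_scalar_prod[of "col Z k" n] by (intro sum.cong refl, simp)
    also have "\<dots> \<le> K * (col Z k \<bullet> col Z k)" by (rule ro[OF cZ])
    finally show "s * (\<Sum>i\<in>S. (\<beta> i k)^2) \<le> s * (K * (col Z k \<bullet> col Z k))" using s by simp
  qed
  also have "\<dots> = K * (real r / s + s * mip Z Z)"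
    unfolding mip_col[OF Z] by (simp add: sum.distrib sum_distrib_left[symmetric] algebra_simps)
  finally show ?thesis .
qed

lemma mip_DD:
  assumes U: "U \<in> carrier_mat n r" and UU: "transpose_mat U * U = 1\<^sub>m r" and Z: "Z \<in> carrier_mat n r"
    and C: "transpose_mat U * Z = transpose_mat Z * U"
  shows "mip (U * transpose_mat Z + Z * transpose_mat U) (U * transpose_mat Z + Z * transpose_mat U)
    = 2 * mip Z Z + 2 * mip (transpose_mat Z * U) (transpose_mat Z * U)"
proof -
  have UT: "transpose_mat U \<in> carrier_mat r n" and ZT: "transpose_mat Z \<in> carrier_mat r n" using U Z by auto
  have A: "U * transpose_mat Z \<in> carrier_mat n n" and B: "Z * transpose_mat U \<in> carrier_mat n n" using U Z by auto
  have m1: "mip (U * transpose_mat Z) (U * transpose_mat Z) = mip Z Z"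
  proof -
    have "mip (U * transpose_mat Z) (U * transpose_mat Z) = mip (transpose_mat Z) (transpose_mat U * (U * transpose_mat Z))"
      using U ZT by (intro mip_mult_left[of _ n r _ n], auto)
    also have "transpose_mat U * (U * transpose_mat Z) = transpose_mat Z"
      using U ZT UU by (simp add: assoc_mult_mat[of _ r n _ r _ n, symmetric])
    also have "mip (transpose_mat Z) (transpose_mat Z) = mip Z Z" using Z by (intro mip_transpose, auto)
    finally show ?thesis .
  qed
  have m4: "mip (Z * transpose_mat U) (Z * transpose_mat U) = mip Z Z"
  proof -
    have "mip (Z * transpose_mat U) (Z * transpose_mat U) = mip (transpose_mat (Z * transpose_mat U)) (transpose_mat (Z * transpose_mat U))"
      using B by (intro mip_transpose[symmetric], auto)
    also have "transpose_mat (Z * transpose_mat U) = U * transpose_mat Z" using U Z by (simp add: transpose_mult[of _ n r])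
    finally show ?thesis using m1 by simp
  qed
  have m2: "mip (U * transpose_mat Z) (Z * transpose_mat U) = mip (transpose_mat Z * U) (transpose_mat Z * U)"
  proof -
    have "mip (U * transpose_mat Z) (Z * transpose_mat U) = mip (transpose_mat Z) (transpose_mat U * (Z * transpose_mat U))"
      using U ZT B by (intro mip_mult_left[of _ n r _ n], auto)
    also have "transpose_mat U * (Z * transpose_mat U) = (transpose_mat U * Z) * transpose_mat U"
      using U Z UT by (simp add: assoc_mult_mat[of _ r n _ r _ n])
    also have "mip (transpose_mat Z) ((transpose_mat U * Z) * transpose_mat U) = mip ((transpose_mat U * Z) * transpose_mat U) (transpose_mat Z)"
      using U Z by (intro mip_comm[of _ r n], auto)
    also have "\<dots> = mip (transpose_mat U * Z) (transpose_mat Z * transpose_mat (transpose_mat U))"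
      using U Z by (intro mip_mult_right[of _ r r _ n], auto)
    also have "\<dots> = mip (transpose_mat Z * U) (transpose_mat Z * U)" unfolding C by simp
    finally show ?thesis .
  qed
  have m3: "mip (Z * transpose_mat U) (U * transpose_mat Z) = mip (U * transpose_mat Z) (Z * transpose_mat U)"
    using A B by (intro mip_comm, auto)
  show ?thesis
    using A B by (simp add: mip_add_left[of _ n n] mip_add_right[of _ n n] m1 m2 m3 m4)
qed

lemma mip_cs:
  assumes A: "A \<in> carrier_mat n k" and B: "B \<in> carrier_mat n k" and s: "s > 0"
  shows "mip A B \<le> (s * mip A A + mip B B / s) / 2"
proof -
  have "mip A B = (\<Sum>i<n. \<Sum>j<k. A$$(i,j) * B$$(i,j))" unfolding mip_def using A by simp
  also have "\<dots> \<le> (\<Sum>i<n. \<Sum>j<k. (s * (A$$(i,j) * A$$(i,j)) + (B$$(i,j) * B$$(i,j)) / s) / 2)"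
  proof (intro sum_mono)
    fix i j
    have "0 \<le> (s * A$$(i,j) - B$$(i,j))^2 / s" using s by simp
    also have "(s * A$$(i,j) - B$$(i,j))^2 / s = s * (A$$(i,j) * A$$(i,j)) + (B$$(i,j) * B$$(i,j)) / s - 2 * (A$$(i,j) * B$$(i,j))"
      using s by (simp add: power2_eq_square field_simps)
    finally show "A$$(i,j) * B$$(i,j) \<le> (s * (A$$(i,j) * A$$(i,j)) + (B$$(i,j) * B$$(i,j)) / s) / 2" by simp
  qed
  also have "\<dots> = (\<Sum>i<n. \<Sum>j<k. (s * (A$$(i,j) * A$$(i,j)))) / 2 + (\<Sum>i<n. \<Sum>j<k. (B$$(i,j) * B$$(i,j)) / s) / 2"
    by (simp add: sum.distrib sum_divide_distrib add_divide_distrib)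
  also have "\<dots> = (s * mip A A + mip B B / s) / 2"
    unfolding mip_def using A B by (simp add: sum_divide_distrib sum_distrib_left add_divide_distrib)
  finally show ?thesis .
qed




lemma mip_zero:
  assumes A: "A \<in> carrier_mat n k" and z: "mip A A = 0"
  shows "A = 0\<^sub>m n k"
proof (rule eq_matI)
  fix i j assume ij: "i < dim_row (0\<^sub>m n k)" "j < dim_col (0\<^sub>m n k)"
  have "(\<Sum>i<n. \<Sum>j<k. A$$(i,j) * A$$(i,j)) = 0" using z A unfolding mip_def by simp
  hence "\<forall>i\<in>{..<n}. (\<Sum>j<k. A$$(i,j) * A$$(i,j)) = 0"
    by (subst sum_nonneg_eq_0_iff[symmetric], auto intro: sum_nonneg)
  hence "\<forall>i\<in>{..<n}. \<forall>j\<in>{..<k}. A$$(i,j) * A$$(i,j) = 0"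
    by (auto simp: sum_nonneg_eq_0_iff)
  thus "A $$ (i,j) = 0\<^sub>m n k $$ (i,j)" using ij by auto
qed (use A in auto)

lemma quad_mip: assumes A: "A \<in> carrier_mat n n" and x: "x \<in> carrier_vec n"
  shows "x \<bullet> (A *\<^sub>v x) = mip A (outer x x)"
  unfolding quad_bil'[OF A x] bil_def mip_def using A x
  by (simp, intro sum.cong refl, simp add: ac_simps)

lemma mip_GG:
  assumes G: "psd_mat n G"
  shows "mip G G \<le> (\<Sum>i<n. G$$(i,i))^2"
proof -
  have Gc: "G \<in> carrier_mat n n" using G unfolding psd_mat_def sym_mat_def by auto
  have ps: "\<And>v. bil n (\<lambda>i j. G$$(i,j)) v v \<ge> 0" using psd_bil[OF G] by auto
  have sy: "\<forall>i<n. \<forall>j<n. G$$(j,i) = G$$(i,j)" using psd_sym[OF G] .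
  have "mip G G = (\<Sum>i<n. \<Sum>j<n. (G$$(i,j))^2)" unfolding mip_def using Gc by (simp add: power2_eq_square)
  also have "\<dots> \<le> (\<Sum>i<n. \<Sum>j<n. G$$(i,i) * G$$(j,j))"
    by (intro sum_mono, rule psd_offdiag_sq[OF ps], use sy in auto)
  also have "\<dots> = (\<Sum>i<n. G$$(i,i))^2" by (simp add: power2_eq_square sum_product)
  finally show ?thesis .
qed

lemma psd_diag_mat: assumes "psd_mat n G" "i < n" shows "G$$(i,i) \<ge> 0"
  using psd_diag[of n "\<lambda>i j. G$$(i,j)"] psd_bil[OF assms(1)] assms(2) by auto

lemma mip_sum_sq:
  assumes D: "D \<in> carrier_mat n n" and G: "G \<in> carrier_mat n n"
  shows "mip (D + G) (D + G) \<le> 2 * mip D D + 2 * mip G G"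
proof -
  have "mip (D + G) (D + G) = (\<Sum>i<n. \<Sum>j<n. (D$$(i,j) + G$$(i,j))^2)"
    unfolding mip_def using D G by (simp add: power2_eq_square)
  also have "\<dots> \<le> (\<Sum>i<n. \<Sum>j<n. 2 * (D$$(i,j))^2 + 2 * (G$$(i,j))^2)"
  proof (intro sum_mono)
    fix i j
    have "0 \<le> (D$$(i,j) - G$$(i,j))^2" by simp
    thus "(D$$(i,j) + G$$(i,j))^2 \<le> 2 * (D$$(i,j))^2 + 2 * (G$$(i,j))^2"
      by (simp add: power2_eq_square algebra_simps)
  qed
  also have "\<dots> = 2 * mip D D + 2 * mip G G"
    unfolding mip_def using D G by (simp add: sum.distrib sum_distrib_left power2_eq_square)
  finally show ?thesis .
qed


lemma phi_ineq: "\<bar>b\<bar> + (if b \<noteq> 0 then - sgn b * x else \<bar>x\<bar>) \<le> \<bar>b - x\<bar>" for b x :: real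
  by (cases "b > 0"; cases "b < 0"; auto simp: sgn_if)

lemma phi_ge: "(if b \<noteq> 0 then - sgn b * x else \<bar>x\<bar>) \<ge> - \<bar>x\<bar>" for b x :: real
  by (cases "b > 0"; cases "b < 0"; auto simp: sgn_if)

lemma core:
  fixes n r m :: nat and X0 U \<Lambda> Xhat :: "real mat" and a :: "nat \<Rightarrow> real vec"
    and \<beta> w z \<mu> :: "nat \<Rightarrow> real" and \<epsilon> s0 :: real and S :: "nat set"
  assumes X0psd: "psd_mat n X0" and r0: "0 < r"
    and Uc: "U \<in> carrier_mat n r" and UU: "transpose_mat U * U = 1\<^sub>m r"
    and \<Lambda>c: "\<Lambda> \<in> carrier_mat r r"
    and X0eq: "X0 = U * \<Lambda> * transpose_mat U"
    and ac: "\<forall>i<m. a i \<in> carrier_vec n"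
    and zeq: "\<forall>i<m. z i = meas a X0 i + \<beta> i + w i"
    and w\<epsilon>: "(\<Sum>i<m. \<bar>w i\<bar>) \<le> \<epsilon>"
    and Xpsd: "psd_mat n Xhat"
    and opt: "\<forall>X. psd_mat n X \<longrightarrow>
        (\<Sum>i<m. \<bar>z i - meas a Xhat i\<bar>) \<le> (\<Sum>i<m. \<bar>z i - meas a X i\<bar>)"
    and s0pos: "0 < s0" and s01: "s0 < 1"
    and Ssub: "S \<subseteq> {..<m}"
    and cardS: "real (card S) / real m = s0 / (13 * sqrt (2 * real r))"
    and supp: "\<forall>i<m. \<beta> i \<noteq> 0 \<longrightarrow> i \<in> S"
    and C1: "\<forall>X. sym_mat n X \<longrightarrow> meas_l1 a {..<m} X / real m \<le> (1 + 1/10) * nuclear_norm X"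
    and C2: "\<forall>X. sym_mat n X \<longrightarrow> meas_l1 a S X / real (card S) \<le> (1 + 1/10) * nuclear_norm X"
    and tang: "\<forall>X \<in> tangent_space n r U. X \<noteq> 0\<^sub>m n n \<longrightarrow>
        meas_l1 a ({..<m} - S) X / real (card ({..<m} - S)) > (1/5) * (1 - 1/12) * frob_norm X"
    and loew: "loewner_le n (proj_Tperp n U (meas_adj n m a \<mu>))
                 (- (1 / real r) \<cdot>\<^sub>m proj_Tperp n U (1\<^sub>m n))"
    and frobT: "frob_norm (proj_T n U (meas_adj n m a \<mu>)) \<le> 1 / (13 * real r)"
    and \<mu>s: "\<forall>i<m. \<beta> i \<noteq> 0 \<longrightarrow> \<mu> i = 9 / real m * sgn (\<beta> i)"
    and \<mu>b: "\<forall>i<m. \<beta> i = 0 \<longrightarrow> \<bar>\<mu> i\<bar> \<le> 9 / real m"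
  shows "frob_norm (Xhat - X0) \<le> 12000 * (real r * \<epsilon> / real m)"
proof -
  have rpos: "real r \<ge> 1" using r0 by simp
  have sq2r: "sqrt (2 * real r) \<ge> sqrt 2" using rpos by simp
  have sqrt2: "sqrt 2 \<ge> (14142::real) / 10000"
    by (rule real_le_rsqrt, simp add: power2_eq_square)
  have sqpos: "sqrt (2 * real r) > 0" using r0 by simp
  have m0: "m > 0"
  proof (rule ccontr)
    assume "\<not> m > 0" hence "m = 0" by simp
    hence "s0 / (13 * sqrt (2 * real r)) = 0" using cardS by simp
    thus False using s0pos sqpos by simp
  qed
  have mpos: "real m > 0" using m0 by simp
  have finS: "finite S" using Ssub finite_subset by blast
  define \<sigma> where "\<sigma> = real (card S) / real m"
  have \<sigma>eq: "\<sigma> * (13 * sqrt (2 * real r)) = s0" unfolding \<sigma>_def cardS using sqpos by simp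
  have \<sigma>pos: "\<sigma> > 0" unfolding \<sigma>_def cardS using s0pos sqpos by simp
  have \<sigma>le: "\<sigma> \<le> s0 * (544 / 10000)"
  proof -
    have "13 * sqrt (2 * real r) \<ge> 13 * (14142 / 10000)" using sq2r sqrt2 by linarith
    hence "s0 = \<sigma> * (13 * sqrt (2 * real r))" using \<sigma>eq by simp
    also have "\<dots> \<ge> \<sigma> * (13 * (14142 / 10000))"
      using \<open>13 * sqrt (2 * real r) \<ge> 13 * (14142 / 10000)\<close> \<sigma>pos by (intro mult_left_mono, auto)
    finally have "s0 \<ge> \<sigma> * (13 * (14142 / 10000))" .
    thus ?thesis using s0pos by linarith
  qed
  have \<sigma>1: "\<sigma> < 1" using \<sigma>le s01 s0pos by simp
  have cardSpos: "card S > 0" using \<sigma>pos unfolding \<sigma>_def by (cases "card S = 0", auto)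
  have cardS_m: "card S < m" using \<sigma>1 mpos unfolding \<sigma>_def by (simp add: divide_less_eq)
  define R where "R = {..<m} - S"
  have cardR: "card R = m - card S" unfolding R_def using Ssub finS by (simp add: card_Diff_subset)
  have cardRpos: "card R > 0" using cardR cardS_m by simp
  have cardR_real: "real (card R) = (1 - \<sigma>) * real m" unfolding cardR \<sigma>_def using cardS_m mpos
    by (simp add: of_nat_diff field_simps)
  have \<epsilon>0: "\<epsilon> \<ge> 0"
  proof -
    have "(\<Sum>i<m. \<bar>w i\<bar>) \<ge> 0" by (rule sum_nonneg, simp)
    thus ?thesis using w\<epsilon> by linarith
  qed
  define Q where "Q = 1\<^sub>m n - U * transpose_mat U"
  note Uf = U_facts[OF Uc UU, folded Q_def]
  have Qc: "Q \<in> carrier_mat n n" and QT: "transpose_mat Q = Q" and QQ: "Q * Q = Q"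
    and QU: "Q * U = 0\<^sub>m n r" and UQ: "transpose_mat U * Q = 0\<^sub>m r n" using Uf by auto
  have Xc: "Xhat \<in> carrier_mat n n" and XT: "transpose_mat Xhat = Xhat"
    using Xpsd unfolding psd_mat_def sym_mat_def by auto
  have X0c: "X0 \<in> carrier_mat n n" and X0T: "transpose_mat X0 = X0"
    using X0psd unfolding psd_mat_def sym_mat_def by auto
  define H where "H = Xhat - X0"
  have Hc: "H \<in> carrier_mat n n" unfolding H_def using Xc X0c by simp
  have HT: "transpose_mat H = H" unfolding H_def using Xc X0c XT X0T by (simp add: transpose_minus[of _ n n])
  define G where "G = Q * H * Q"
  have G_def': "proj_Tperp n U H = G" unfolding proj_Tperp_def G_def Q_def ..
  have Gc: "G \<in> carrier_mat n n" unfolding G_def using Qc Hc by simp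
  have X0Q: "X0 * Q = 0\<^sub>m n n"
  proof -
    have "X0 * Q = U * \<Lambda> * (transpose_mat U * Q)" unfolding X0eq using Uc \<Lambda>c Qc by (simp add: assoc_d)
    also have "\<dots> = 0\<^sub>m n n" unfolding UQ using Uc \<Lambda>c by simp
    finally show ?thesis .
  qed
  have GX: "G = Q * Xhat * Q"
  proof -
    have "H * Q = Xhat * Q - X0 * Q" unfolding H_def using Xc X0c Qc by (simp add: minus_mult_distrib_mat[of _ n n])
    also have "\<dots> = Xhat * Q" unfolding X0Q using Xc Qc by (intro eq_matI, auto)
    finally have HQ: "H * Q = Xhat * Q" .
    have "G = Q * (H * Q)" unfolding G_def using Qc Hc by simp
    also have "\<dots> = Q * Xhat * Q" unfolding HQ using Qc Xc by simp
    finally show ?thesis .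
  qed
  have Gpsd: "psd_mat n G" unfolding GX by (rule psd_QXQ[OF Qc QT Xpsd])
  define D where "D = H - G"
  have D_def': "proj_T n U H = D" unfolding proj_T_def G_def' D_def ..
  have Dc: "D \<in> carrier_mat n n" unfolding D_def using Hc Gc by simp
  have HDG: "H = D + G" unfolding D_def using Hc Gc by (intro eq_matI, auto)
  define Z where "Z = H * U - (1/2) \<cdot>\<^sub>m (U * (transpose_mat U * H * U))"
  note td = tangent_decomp[OF Uc UU Hc HT, folded Q_def Z_def]
  have DZ: "D = U * transpose_mat Z + Z * transpose_mat U" unfolding D_def G_def using td by simp
  have Zc: "Z \<in> carrier_mat n r" using td by simp
  have ZU: "transpose_mat Z * U = (1/2) \<cdot>\<^sub>m (transpose_mat U * H * U)" using td by simp
  have UZ: "transpose_mat U * Z = transpose_mat Z * U"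
  proof -
    have "transpose_mat U * Z = transpose_mat (transpose_mat Z * U)" using Uc Zc by (simp add: transpose_mult[of _ r n])
    also have "\<dots> = (1/2) \<cdot>\<^sub>m (transpose_mat U * H * U)" unfolding ZU using Uc Hc
      by (simp add: mat_norm HT)
    finally show ?thesis unfolding ZU .
  qed
  have Dtan: "D \<in> tangent_space n r U" unfolding tangent_space_def DZ using Zc by blast
  define Y where "Y = meas_adj n m a \<mu>"
  have Yc: "Y \<in> carrier_mat n n" unfolding Y_def meas_adj_def by simp
  define YP where "YP = Q * Y * Q"
  have YP_def': "proj_Tperp n U Y = YP" unfolding proj_Tperp_def YP_def Q_def ..
  define YT where "YT = Y - YP"
  have YT_def': "proj_T n U Y = YT" unfolding proj_T_def YP_def' YT_def ..
  have YPc: "YP \<in> carrier_mat n n" unfolding YP_def using Qc Yc by simp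
  have YTc: "YT \<in> carrier_mat n n" unfolding YT_def using YPc Yc by simp
  define f where "f = frob_norm D"
  have f0: "f \<ge> 0" unfolding f_def frob_mip using mip_self_nonneg by simp
  have ff: "f * f = mip D D" unfolding f_def frob_mip using mip_self_nonneg by simp
  define t where "t = (\<Sum>i<n. G$$(i,i))"
  have t0: "t \<ge> 0" unfolding t_def by (intro sum_nonneg, use psd_diag_mat[OF Gpsd] in auto)
  have tmip: "mip (1\<^sub>m n) G = t" unfolding t_def using mip_one[OF Gc] .
  define x where "x i = meas a H i" for i
  define d where "d i = meas a D i" for i
  define g where "g i = meas a G i" for i
  have xdg: "x i = d i + g i" if "i < m" for i
    unfolding x_def d_def g_def HDG using ac that Dc Gc by (intro meas_plus, auto)
  have g0: "g i \<ge> 0" if "i < m" for i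
    unfolding g_def meas_def using Gpsd ac that unfolding psd_mat_def by auto
  have xm: "x i = meas a Xhat i - meas a X0 i" if "i < m" for i
    unfolding x_def H_def using ac that Xc X0c by (intro meas_minus, auto)
  define \<phi> where "\<phi> i = (if \<beta> i \<noteq> 0 then - sgn (\<beta> i) * x i else \<bar>x i\<bar>)" for i
  have S1: "(\<Sum>i<m. \<phi> i) \<le> 2 * \<epsilon>"
  proof -
    have "(\<Sum>i<m. \<bar>\<beta> i\<bar> + \<phi> i - \<bar>w i\<bar>) \<le> (\<Sum>i<m. \<bar>z i - meas a Xhat i\<bar>)"
    proof (intro sum_mono)
      fix i assume i: "i \<in> {..<m}"
      have "z i - meas a Xhat i = (\<beta> i - x i) + w i" using zeq xm i by auto
      moreover have "\<bar>\<beta> i\<bar> + \<phi> i \<le> \<bar>\<beta> i - x i\<bar>" unfolding \<phi>_def by (rule phi_ineq)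
      ultimately show "\<bar>\<beta> i\<bar> + \<phi> i - \<bar>w i\<bar> \<le> \<bar>z i - meas a Xhat i\<bar>" by linarith
    qed
    also have "\<dots> \<le> (\<Sum>i<m. \<bar>z i - meas a X0 i\<bar>)" using opt X0psd by blast
    also have "\<dots> \<le> (\<Sum>i<m. \<bar>\<beta> i\<bar> + \<bar>w i\<bar>)"
    proof (intro sum_mono)
      fix i assume i: "i \<in> {..<m}"
      have "z i - meas a X0 i = \<beta> i + w i" using zeq i by auto
      thus "\<bar>z i - meas a X0 i\<bar> \<le> \<bar>\<beta> i\<bar> + \<bar>w i\<bar>" by linarith
    qed
    finally have "(\<Sum>i<m. \<bar>\<beta> i\<bar> + \<phi> i - \<bar>w i\<bar>) \<le> (\<Sum>i<m. \<bar>\<beta> i\<bar> + \<bar>w i\<bar>)" .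
    hence "(\<Sum>i<m. \<phi> i) \<le> 2 * (\<Sum>i<m. \<bar>w i\<bar>)"
      by (simp add: sum.distrib sum_subtractf)
    thus ?thesis using w\<epsilon> by linarith
  qed
  have S2: "mip Y H \<ge> - (18 * \<epsilon> / real m)"
  proof -
    have "mip Y H = (\<Sum>i<m. \<mu> i * x i)" unfolding Y_def x_def by (rule mip_meas_adj[OF Hc ac])
    also have "\<dots> \<ge> (\<Sum>i<m. - (9 / real m) * \<phi> i)"
    proof (intro sum_mono)
      fix i assume i: "i \<in> {..<m}"
      show "- (9 / real m) * \<phi> i \<le> \<mu> i * x i"
      proof (cases "\<beta> i = 0")
        case True
        have "\<bar>\<mu> i\<bar> \<le> 9 / real m" using \<mu>b True i by auto
        hence "\<bar>\<mu> i\<bar> * \<bar>x i\<bar> \<le> 9 / real m * \<bar>x i\<bar>" by (intro mult_right_mono, auto)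
        moreover have "- (\<bar>\<mu> i\<bar> * \<bar>x i\<bar>) \<le> \<mu> i * x i" by (simp add: abs_mult[symmetric])
        ultimately show ?thesis unfolding \<phi>_def using True by simp
      next
        case False
        thus ?thesis unfolding \<phi>_def using \<mu>s i by simp
      qed
    qed
    finally have "mip Y H \<ge> - (9 / real m) * (\<Sum>i<m. \<phi> i)" by (simp add: sum_distrib_left)
    moreover have "- (9 / real m) * (\<Sum>i<m. \<phi> i) \<ge> - (9 / real m) * (2 * \<epsilon>)"
      using S1 mpos by (intro mult_left_mono_neg, auto)
    ultimately show ?thesis by simp
  qed
  have S3: "mip Y H = mip YT D + mip YP G"
  proof -
    have a1: "mip YP H = mip Y G" unfolding YP_def G_def by (rule mip_QAQ[OF Qc QT Yc Hc])
    have a2: "mip YP G = mip Y G"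
    proof -
      have "mip YP G = mip Y (Q * G * Q)" unfolding YP_def by (rule mip_QAQ[OF Qc QT Yc Gc])
      also have "Q * G * Q = G" unfolding G_def by (rule QQ_idem[OF Qc QQ Hc])
      finally show ?thesis .
    qed
    have "mip YT D = mip Y H - mip Y G - mip YP H + mip YP G"
      unfolding YT_def D_def using Yc YPc Hc Gc
      by (simp add: mip_minus_left[of _ n n] mip_minus_right[of _ n n])
    thus ?thesis using a1 a2 by simp
  qed
  have S4: "mip YT D \<le> f / (13 * real r)"
  proof (cases "f = 0")
    case True
    hence "D = 0\<^sub>m n n" using mip_zero[OF Dc] ff by simp
    hence "mip YT D = 0" unfolding mip_def using YTc by simp
    thus ?thesis using True by simp
  next
    case False
    hence fpos: "f > 0" using f0 by simp
    define k where "k = 1 / (13 * real r)"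
    have kpos: "k > 0" unfolding k_def using r0 by simp
    have YTn: "mip YT YT \<le> k * k"
    proof -
      have "sqrt (mip YT YT) \<le> k" using frobT unfolding YT_def' Y_def[symmetric] frob_mip k_def .
      hence "(sqrt (mip YT YT))^2 \<le> k^2" using mip_self_nonneg by (intro power_mono, auto)
      thus ?thesis using mip_self_nonneg by (simp add: power2_eq_square)
    qed
    define sc where "sc = f / k"
    have scpos: "sc > 0" unfolding sc_def using fpos kpos by simp
    have "mip YT D \<le> (sc * mip YT YT + mip D D / sc) / 2" by (rule mip_cs[OF YTc Dc scpos])
    also have "\<dots> \<le> (sc * (k * k) + f * f / sc) / 2"
      using YTn scpos ff by (intro divide_right_mono add_mono mult_left_mono, auto)
    also have "\<dots> = f * k" unfolding sc_def using fpos kpos by (simp add: field_simps)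
    finally show ?thesis unfolding k_def by simp
  qed
  have S5: "mip YP G \<le> - (1 / real r) * t"
  proof -
    have Q1: "proj_Tperp n U (1\<^sub>m n) = Q" unfolding proj_Tperp_def Q_def[symmetric] using Qc QQ by simp
    define N where "N = (- (1 / real r)) \<cdot>\<^sub>m Q - YP"
    have Npsd: "psd_mat n N" using loew unfolding loewner_le_def Q1 Y_def[symmetric] YP_def' N_def .
    have "mip G N \<ge> 0" by (rule psd_mip_nonneg[OF Gpsd Npsd])
    also have "mip G N = - (1 / real r) * mip G Q - mip G YP"
      unfolding N_def using Gc Qc YPc by (simp add: mip_minus_right[of _ n n] mip_smult_right[of _ n n])
    also have "mip G Q = t"
    proof -
      have e1: "Q * 1\<^sub>m n * Q = Q" using Qc QQ by simp
      have "mip G Q = mip Q G" using Gc Qc by (rule mip_comm)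
      also have "\<dots> = mip (Q * 1\<^sub>m n * Q) G" unfolding e1 ..
      also have "\<dots> = mip (1\<^sub>m n) (Q * G * Q)" by (rule mip_QAQ[OF Qc QT _ Gc], simp)
      also have "Q * G * Q = G" unfolding G_def by (rule QQ_idem[OF Qc QQ Hc])
      finally show ?thesis using tmip by simp
    qed
    also have "mip G YP = mip YP G" using Gc YPc by (rule mip_comm)
    finally show ?thesis by simp
  qed
  have tbound: "t \<le> f / 13 + 18 * real r * \<epsilon> / real m"
  proof -
    have "(1 / real r) * t \<le> f / (13 * real r) + 18 * \<epsilon> / real m" using S2 S3 S4 S5 by linarith
    hence "real r * ((1 / real r) * t) \<le> real r * (f / (13 * real r) + 18 * \<epsilon> / real m)"
      using r0 by (intro mult_left_mono, auto)
    moreover have "real r * ((1 / real r) * t) = t" using r0 by simp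
    moreover have "real r * (f / (13 * real r) + 18 * \<epsilon> / real m) = f / 13 + 18 * real r * \<epsilon> / real m"
      using r0 by (simp add: field_simps)
    ultimately show ?thesis by simp
  qed
  have aS: "\<forall>i\<in>S. a i \<in> carrier_vec n" using ac Ssub by auto
  have am: "\<forall>i\<in>{..<m}. a i \<in> carrier_vec n" using ac by auto
  have roS: "(\<Sum>i\<in>S. (a i \<bullet> v)^2) \<le> 11/10 * real (card S) * (v \<bullet> v)" if v: "v \<in> carrier_vec n" for v
    by (rule rank_one_bound[OF finS cardSpos aS C2 v])
  have roM: "(\<Sum>i\<in>{..<m}. (a i \<bullet> v)^2) \<le> 11/10 * real (card {..<m}) * (v \<bullet> v)" if v: "v \<in> carrier_vec n" for v
    by (rule rank_one_bound[OF _ _ am _ v], use m0 C1 in auto)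
  have S6: "(\<Sum>i<m. g i) \<le> 11/10 * real m * t"
  proof -
    define M where "M = meas_adj n m a (\<lambda>_. 1)"
    have Mc: "M \<in> carrier_mat n n" unfolding M_def meas_adj_def by simp
    have gM: "(\<Sum>i<m. g i) = mip M G" unfolding M_def g_def using mip_meas_adj[OF Gc ac, of "\<lambda>_. 1"] by simp
    define c where "c = 11/10 * real m"
    define B where "B = c \<cdot>\<^sub>m 1\<^sub>m n - M"
    have Bc: "B \<in> carrier_mat n n" unfolding B_def using Mc by simp
    have MT: "transpose_mat M = M" unfolding M_def meas_adj_def by (rule eq_matI, auto simp: ac_simps)
    have BT: "transpose_mat B = B" unfolding B_def using Mc MT
      by (simp add: transpose_minus[of _ n n] transpose_smult)
    have Bq: "v \<bullet> (B *\<^sub>v v) \<ge> 0" if v: "v \<in> carrier_vec n" for v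
    proof -
      have "v \<bullet> (B *\<^sub>v v) = v \<bullet> ((c \<cdot>\<^sub>m 1\<^sub>m n) *\<^sub>v v) - v \<bullet> (M *\<^sub>v v)"
        unfolding B_def using Mc v
        by (subst minus_mult_distrib_mat_vec[of _ n n], auto intro!: scalar_prod_minus_distrib[of _ n] mult_mat_vec_carrier[of _ n n])
      also have "(c \<cdot>\<^sub>m 1\<^sub>m n) *\<^sub>v v = c \<cdot>\<^sub>v v" using v by (simp add: smult_mat_mult_vec[of _ n n])
      also have "v \<bullet> (M *\<^sub>v v) = mip M (outer v v)" by (rule quad_mip[OF Mc v])
      also have "\<dots> = (\<Sum>i<m. (a i \<bullet> v)^2)"
        unfolding M_def using mip_meas_adj[OF outer_carrier[OF v v] ac, of "\<lambda>_. 1"] ac v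
        by (simp add: meas_def, intro sum.cong refl, subst meas_outer[of _ n], auto)
      finally have "v \<bullet> (B *\<^sub>v v) = c * (v \<bullet> v) - (\<Sum>i<m. (a i \<bullet> v)^2)" using v by simp
      moreover have "(\<Sum>i<m. (a i \<bullet> v)^2) \<le> c * (v \<bullet> v)" using roM[OF v] unfolding c_def by simp
      ultimately show ?thesis by simp
    qed
    have Bpsd: "psd_mat n B" unfolding psd_mat_def sym_mat_def using Bc BT Bq by auto
    have "mip G B \<ge> 0" by (rule psd_mip_nonneg[OF Gpsd Bpsd])
    also have "mip G B = c * mip G (1\<^sub>m n) - mip G M"
      unfolding B_def using Gc Mc by (simp add: mip_minus_right[of _ n n] mip_smult_right[of _ n n])
    also have "mip G (1\<^sub>m n) = t" using mip_comm[OF Gc one_carrier_mat] tmip by simp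
    also have "mip G M = mip M G" using Gc Mc by (rule mip_comm)
    finally show ?thesis unfolding gM c_def by simp
  qed
  have S7: "(\<Sum>i\<in>S. \<bar>d i\<bar>) \<le> 11/10 * real (card S) * sqrt (2 * real r) * f"
  proof (cases "f = 0")
    case True
    hence "D = 0\<^sub>m n n" using mip_zero[OF Dc] ff by simp
    hence "d i = 0" if "i \<in> S" for i
    proof -
      assume D0: "D = 0\<^sub>m n n"
      have "dim_vec (a i) = n" using aS that by auto
      thus ?thesis unfolding d_def meas_def D0 by (simp add: scalar_prod_def)
    qed
    thus ?thesis using True by simp
  next
    case False
    hence fpos: "f > 0" using f0 by simp
    define K where "K = 11/10 * real (card S)"
    have K0: "K \<ge> 0" unfolding K_def by simp
    define sc where "sc = sqrt (2 * real r) / f"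
    have scpos: "sc > 0" unfolding sc_def using fpos sqpos by simp
    have "(\<Sum>i\<in>S. \<bar>d i\<bar>) \<le> K * (real r / sc + sc * mip Z Z)"
      unfolding d_def DZ K_def by (rule S_bound[OF Uc UU Zc aS roS scpos])
    also have "\<dots> \<le> K * (real r / sc + sc * (f * f / 2))"
    proof -
      have "mip D D = 2 * mip Z Z + 2 * mip (transpose_mat Z * U) (transpose_mat Z * U)"
        unfolding DZ by (rule mip_DD[OF Uc UU Zc UZ])
      hence "mip Z Z \<le> f * f / 2" using ff mip_self_nonneg[of "transpose_mat Z * U"] by simp
      thus ?thesis using K0 scpos by (intro mult_left_mono add_left_mono, auto)
    qed
    also have "real r / sc + sc * (f * f / 2) = sqrt (2 * real r) * f"
    proof -
      have s2: "sqrt (2 * real r) * sqrt (2 * real r) = 2 * real r" using r0 by simp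
      have gen: "R / (q / f) + q / f * (f * f / 2) = q * f" if "q > 0" "q * q = 2 * R" for q R :: real
      proof -
        have "R = q * q / 2" using that by simp
        thus ?thesis using that fpos by (simp add: field_simps)
      qed
      show ?thesis unfolding sc_def by (rule gen[OF sqpos s2])
    qed
    finally show ?thesis unfolding K_def by (simp add: mult.assoc)
  qed
  have S8: "11/60 * real (card R) * f \<le> (\<Sum>i\<in>R. \<bar>d i\<bar>)"
  proof (cases "D = 0\<^sub>m n n")
    case True
    hence "f = 0" unfolding f_def frob_norm_def by simp
    thus ?thesis by (simp add: sum_nonneg)
  next
    case False
    have "meas_l1 a R D / real (card R) > (1/5) * (1 - 1/12) * frob_norm D"
      using tang Dtan False unfolding R_def by blast
    hence "meas_l1 a R D > 11/60 * f * real (card R)" unfolding f_def using cardRpos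
      by (simp add: field_simps)
    thus ?thesis unfolding meas_l1_def d_def by (simp add: mult_ac)
  qed
  have S9: "(\<Sum>i\<in>R. \<bar>d i\<bar>) \<le> 2 * \<epsilon> + (\<Sum>i\<in>S. \<bar>d i\<bar>) + (\<Sum>i<m. g i)"
  proof -
    have RS: "{..<m} = R \<union> S" "R \<inter> S = {}" unfolding R_def using Ssub by auto
    have finR: "finite R" unfolding R_def by simp
    have split: "(\<Sum>i<m. h i) = (\<Sum>i\<in>R. h i) + (\<Sum>i\<in>S. h i)" for h :: "nat \<Rightarrow> real"
      unfolding RS(1) by (rule sum.union_disjoint[OF finR finS RS(2)])
    have Rm: "i < m" if "i \<in> R" for i using that unfolding R_def by auto
    have Sm: "i < m" if "i \<in> S" for i using that Ssub by auto
    have phiR: "\<phi> i = \<bar>x i\<bar>" if "i \<in> R" for i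
    proof -
      have "\<beta> i = 0" using supp that Rm[OF that] unfolding R_def by auto
      thus ?thesis unfolding \<phi>_def by simp
    qed
    have phiS: "\<phi> i \<ge> - \<bar>x i\<bar>" for i unfolding \<phi>_def by (rule phi_ge)
    have "(\<Sum>i\<in>R. \<bar>x i\<bar>) - (\<Sum>i\<in>S. \<bar>x i\<bar>) \<le> (\<Sum>i\<in>R. \<phi> i) + (\<Sum>i\<in>S. \<phi> i)"
    proof -
      have "(\<Sum>i\<in>R. \<bar>x i\<bar>) = (\<Sum>i\<in>R. \<phi> i)" using phiR by simp
      moreover have "(\<Sum>i\<in>S. - \<bar>x i\<bar>) \<le> (\<Sum>i\<in>S. \<phi> i)" using phiS by (intro sum_mono, auto)
      ultimately show ?thesis by (simp add: sum_negf)
    qed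
    also have "\<dots> = (\<Sum>i<m. \<phi> i)" using split by simp
    also have "\<dots> \<le> 2 * \<epsilon>" by (rule S1)
    finally have xRS: "(\<Sum>i\<in>R. \<bar>x i\<bar>) - (\<Sum>i\<in>S. \<bar>x i\<bar>) \<le> 2 * \<epsilon>" .
    have dR: "(\<Sum>i\<in>R. \<bar>d i\<bar>) \<le> (\<Sum>i\<in>R. \<bar>x i\<bar>) + (\<Sum>i\<in>R. g i)"
    proof -
      have "(\<Sum>i\<in>R. \<bar>d i\<bar>) \<le> (\<Sum>i\<in>R. \<bar>x i\<bar> + g i)"
      proof (intro sum_mono)
        fix i assume "i \<in> R"
        hence "x i = d i + g i" "g i \<ge> 0" using xdg g0 Rm by auto
        thus "\<bar>d i\<bar> \<le> \<bar>x i\<bar> + g i" by linarith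
      qed
      thus ?thesis by (simp add: sum.distrib)
    qed
    have xS: "(\<Sum>i\<in>S. \<bar>x i\<bar>) \<le> (\<Sum>i\<in>S. \<bar>d i\<bar>) + (\<Sum>i\<in>S. g i)"
    proof -
      have "(\<Sum>i\<in>S. \<bar>x i\<bar>) \<le> (\<Sum>i\<in>S. \<bar>d i\<bar> + g i)"
      proof (intro sum_mono)
        fix i assume "i \<in> S"
        hence "x i = d i + g i" "g i \<ge> 0" using xdg g0 Sm by auto
        thus "\<bar>x i\<bar> \<le> \<bar>d i\<bar> + g i" by linarith
      qed
      thus ?thesis by (simp add: sum.distrib)
    qed
    have "(\<Sum>i<m. g i) = (\<Sum>i\<in>R. g i) + (\<Sum>i\<in>S. g i)" by (rule split)
    thus ?thesis using xRS dR xS by linarith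
  qed
  define E where "E = real r * \<epsilon> / real m"
  have E0: "E \<ge> 0" unfolding E_def using \<epsilon>0 mpos by simp
  have eE: "\<epsilon> / real m \<le> E" unfolding E_def using \<epsilon>0 mpos rpos
    by (simp add: divide_right_mono mult_le_cancel_right1)
  have tE: "t \<le> f / 13 + 18 * E" using tbound unfolding E_def by simp
  have cS: "real (card S) = \<sigma> * real m" unfolding \<sigma>_def using mpos by simp
  have A1: "11/60 * ((1 - \<sigma>) * real m) * f \<le> 2 * \<epsilon> + 11/10 * (\<sigma> * real m) * sqrt (2 * real r) * f + 11/10 * real m * t"
    using S6 S7 S8 S9 unfolding cardR_real[symmetric] cS[symmetric] by linarith
  have A2: "11/60 * (1 - \<sigma>) * f \<le> 2 * (\<epsilon> / real m) + 11/130 * (s0 * f) + 11/10 * t"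
  proof -
    have "real m * (11/60 * (1 - \<sigma>) * f) \<le> real m * (2 * (\<epsilon> / real m) + 11/130 * (s0 * f) + 11/10 * t)"
    proof -
      have k0: "\<sigma> * sqrt (2 * real r) = s0 / 13" using \<sigma>eq by simp
      have k: "\<sigma> * real m * sqrt (2 * real r) * f = real m * (s0 / 13) * f"
      proof -
        have "\<sigma> * real m * sqrt (2 * real r) * f = real m * (\<sigma> * sqrt (2 * real r)) * f" by (simp add: ac_simps)
        thus ?thesis unfolding k0 .
      qed
      have k2a: "11/10 * (\<sigma> * real m) * sqrt (2 * real r) * f = 11/10 * (\<sigma> * real m * sqrt (2 * real r) * f)"
        by (simp only: mult.assoc)
      have k2: "11/10 * (\<sigma> * real m) * sqrt (2 * real r) * f = 11/10 * (real m * (s0 / 13) * f)"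
        unfolding k2a k ..
      have e1: "real m * (11/60 * (1 - \<sigma>) * f) = 11/60 * ((1 - \<sigma>) * real m) * f" by (simp add: algebra_simps)
      have e2: "real m * (2 * (\<epsilon> / real m) + 11/130 * (s0 * f) + 11/10 * t)
          = 2 * \<epsilon> + 11/10 * (real m * (s0 / 13) * f) + 11/10 * real m * t"
        using mpos by (simp add: field_simps)
      show ?thesis unfolding e1 e2 using A1 k2 by linarith
    qed
    thus ?thesis using mpos by (simp add: mult_le_cancel_left_pos)
  qed
  have P1: "\<sigma> * f \<le> 544/10000 * f" using \<sigma>le s01 s0pos f0
  proof -
    have "\<sigma> \<le> 544/10000" using \<sigma>le s01 s0pos by linarith
    thus ?thesis using f0 by (intro mult_right_mono, auto)
  qed
  have P2: "s0 * f \<le> f"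
  proof -
    have "s0 * f \<le> 1 * f" using s01 f0 by (intro mult_right_mono, auto)
    thus ?thesis by simp
  qed
  have fE: "f \<le> 5450 * E"
  proof -
    have "11/60 * (1 - \<sigma>) * f = 11/60 * f - 11/60 * (\<sigma> * f)" by (simp add: right_diff_distrib left_diff_distrib)
    thus ?thesis using A2 P1 P2 tE eE E0 by linarith
  qed
  have tE2: "t \<le> 438 * E" using tE fE E0 by linarith
  have "mip H H \<le> 2 * mip D D + 2 * mip G G" unfolding HDG by (rule mip_sum_sq[OF Dc Gc])
  also have "\<dots> \<le> 2 * (f * f) + 2 * (t * t)"
    using mip_GG[OF Gpsd] ff unfolding t_def by (simp add: power2_eq_square)
  also have "\<dots> \<le> (2 * f + 2 * t)^2" using f0 t0 by (simp add: power2_eq_square algebra_simps)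
  finally have "sqrt (mip H H) \<le> sqrt ((2 * f + 2 * t)^2)" by (rule real_sqrt_le_mono)
  also have "\<dots> = 2 * f + 2 * t" using f0 t0 by simp
  finally have "sqrt (mip H H) \<le> 2 * f + 2 * t" .
  hence "frob_norm (Xhat - X0) \<le> 2 * f + 2 * t" unfolding H_def frob_mip .
  also have "\<dots> \<le> 12000 * E" using fE tE2 E0 by linarith
  finally show ?thesis unfolding E_def .
qed


theorem lemma1:
  "\<exists>c::real. \<forall>(n::nat) (r::nat) (m::nat) (X0::real mat) (U::real mat) (\<Lambda>::real mat)
      (a::nat \<Rightarrow> real vec) (\<beta>::nat \<Rightarrow> real) (w::nat \<Rightarrow> real) (z::nat \<Rightarrow> real)
      (\<epsilon>::real) (Xhat::real mat) (s0::real) (S::nat set) (\<mu>::nat \<Rightarrow> real).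
    psd_mat n X0 \<and> 0 < r \<and>
    U \<in> carrier_mat n r \<and> transpose_mat U * U = 1\<^sub>m r \<and>
    \<Lambda> \<in> carrier_mat r r \<and> (\<forall>i<r. \<forall>j<r. i \<noteq> j \<longrightarrow> \<Lambda> $$ (i,j) = 0) \<and>
    (\<forall>i<r. \<Lambda> $$ (i,i) > 0) \<and>
    X0 = U * \<Lambda> * transpose_mat U \<and>
    (\<forall>i<m. a i \<in> carrier_vec n) \<and>
    (\<forall>i<m. z i = meas a X0 i + \<beta> i + w i) \<and>
    (\<Sum>i<m. \<bar>w i\<bar>) \<le> \<epsilon> \<and>
    psd_mat n Xhat \<and>
    (\<forall>X. psd_mat n X \<longrightarrow>
        (\<Sum>i<m. \<bar>z i - meas a Xhat i\<bar>) \<le> (\<Sum>i<m. \<bar>z i - meas a X i\<bar>)) \<and>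
    0 < s0 \<and> s0 < 1 \<and>
    S \<subseteq> {..<m} \<and>
    real (card S) / real m = s0 / (13 * sqrt (2 * real r)) \<and>
    (\<forall>i<m. \<beta> i \<noteq> 0 \<longrightarrow> i \<in> S) \<and>
    (\<forall>X. sym_mat n X \<longrightarrow>
        meas_l1 a {..<m} X / real m \<le> (1 + 1/10) * nuclear_norm X) \<and>
    (\<forall>X. sym_mat n X \<longrightarrow>
        meas_l1 a S X / real (card S) \<le> (1 + 1/10) * nuclear_norm X) \<and>
    (\<forall>X \<in> tangent_space n r U. X \<noteq> 0\<^sub>m n n \<longrightarrow>
        meas_l1 a ({..<m} - S) X / real (card ({..<m} - S))
          > (1/5) * (1 - 1/12) * frob_norm X) \<and>
    loewner_le n (proj_Tperp n U (meas_adj n m a \<mu>))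
                 (- (1 / real r) \<cdot>\<^sub>m proj_Tperp n U (1\<^sub>m n)) \<and>
    frob_norm (proj_T n U (meas_adj n m a \<mu>)) \<le> 1 / (13 * real r) \<and>
    (\<forall>i<m. \<beta> i \<noteq> 0 \<longrightarrow> \<mu> i = 9 / real m * sgn (\<beta> i)) \<and>
    (\<forall>i<m. \<beta> i = 0 \<longrightarrow> \<bar>\<mu> i\<bar> \<le> 9 / real m)
    \<longrightarrow> frob_norm (Xhat - X0) \<le> c * (real r * \<epsilon> / real m)"
    apply (rule exI[of _ 12000])
  apply (intro allI impI)
  apply (elim conjE)
  apply (rule core)
                      apply assumption+
  done

end
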